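(* Let $V$ be a real-valued measurable function on the cone $\mathcal{C}=\mathbb{C}^\star/\mathbb{Z}_2$ with $(1+r)V\in L^2(\mathcal{C})$, let $\alpha\in[0,1]$, and for $m,m'\in\mathbb{Z}$ and $E,E'>0$ set $$v^{m,m'}_\alpha(E,E')=\int_0^\infty\!\!\int_0^\pi\overline{\phi_{\alpha;m,E}(r,\theta)}\,V(r,\theta)^2\,\phi_{\alpha;m',E'}(r,\theta)\,r\,dr\,d\theta,\qquad \phi_{\alpha;m,E}(r,\theta)=\frac{e^{2im\theta}}{\sqrt{2\pi}}J_{|2m+\alpha|}(\sqrt E\,r).$$ Then for arbitrary $m,m'$ the functions $v^{m,m'}_\alpha(E,E')$ have measurable partial derivatives up to order $3$ in $E$ and $E'$ on $(0,\infty)$, which are essentially bounded on compact subsets.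
   Context: $L^2(\mathcal{C})$ is identified with $\pi$-periodic (in $\theta$) functions $\psi(r,\theta)$ on $(0,\infty)\times\mathbb{R}$ with norm $\|\psi\|^2=\int_0^\infty\int_0^\pi|\psi|^2\,r\,dr\,d\theta$; $J_\mu$ is the Bessel function of the first kind. *)

theory Defs
  imports "HOL-Analysis.Analysis"
begin

text \<open>Bessel function of the first kind (power series), for order nu >= 0 and argument x > 0.\<close>
definition besselJ :: "real \<Rightarrow> real \<Rightarrow> real" where
  "besselJ nu x = (\<Sum>k. (-1) ^ k / (fact k * Gamma (real k + nu + 1)) * (x / 2) powr (2 * real k + nu))"

definition phi :: "real \<Rightarrow> int \<Rightarrow> real \<Rightarrow> real \<Rightarrow> real \<Rightarrow> complex" where
  "phi \<alpha> m E r \<theta> = cis (2 * of_int m * \<theta>) / complex_of_real (sqrt (2 * pi))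
      * complex_of_real (besselJ \<bar>2 * of_int m + \<alpha>\<bar> (sqrt E * r))"

definition vmat :: "(real \<Rightarrow> real \<Rightarrow> real) \<Rightarrow> real \<Rightarrow> int \<Rightarrow> int \<Rightarrow> real \<Rightarrow> real \<Rightarrow> complex" where
  "vmat V \<alpha> m m' E E' =
     (LINT p : {0<..} \<times> {0<..<pi} | lborel.
        cnj (phi \<alpha> m E (fst p) (snd p)) * complex_of_real ((V (fst p) (snd p))\<^sup>2)
        * phi \<alpha> m' E' (fst p) (snd p) * complex_of_real (fst p))"

text \<open>Iterated partial derivatives of a function of (E,E'); True = derivative in E, False = in E'.
  The list is read right to left (the head is the last derivative applied).\<close>
fun pderivs :: "bool list \<Rightarrow> (real \<Rightarrow> real \<Rightarrow> complex) \<Rightarrow> real \<Rightarrow> real \<Rightarrow> complex" where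
  "pderivs [] f = f"
| "pderivs (True # ds) f = (\<lambda>E E'. vector_derivative (\<lambda>x. pderivs ds f x E') (at E))"
| "pderivs (False # ds) f = (\<lambda>E E'. vector_derivative (\<lambda>y. pderivs ds f E y) (at E'))"

definition partial_exists :: "bool \<Rightarrow> bool list \<Rightarrow> (real \<Rightarrow> real \<Rightarrow> complex) \<Rightarrow> real \<Rightarrow> real \<Rightarrow> bool" where
  "partial_exists d ds f E E' =
     (if d then (\<lambda>x. pderivs ds f x E') differentiable (at E)
      else (\<lambda>y. pderivs ds f E y) differentiable (at E'))"

end

theory Submission
  imports Defs "HOL-Analysis.Analysis"
begin

definition bc :: "real \<Rightarrow> nat \<Rightarrow> real" where
  "bc \<nu> k = (-1)^k / (fact k * Gamma (real k + \<nu> + 1))"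

lemma bc_Suc: assumes "0 \<le> \<nu>"
  shows "bc \<nu> (Suc k) = - bc \<nu> k / ((real k + 1) * (real k + \<nu> + 1))"
proof -
  have "Gamma (real (Suc k) + \<nu> + 1) = (real k + \<nu> + 1) * Gamma (real k + \<nu> + 1)"
  proof -
    have "real k + \<nu> + 1 \<notin> \<int>\<^sub>\<le>\<^sub>0" using assms by (auto simp: nonpos_Ints_def)
    then show ?thesis using Gamma_plus1[of "real k + \<nu> + 1"] by (simp add: algebra_simps)
  qed
  then show ?thesis using assms by (simp add: bc_def field_simps)
qed

lemma bc_bound: assumes "0 \<le> \<nu>" shows "\<bar>bc \<nu> k\<bar> \<le> \<bar>bc \<nu> 0\<bar> / fact k"
proof (induction k)
  case 0 then show ?case by simp
next
  case (Suc k)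
  have "\<bar>bc \<nu> (Suc k)\<bar> = \<bar>bc \<nu> k\<bar> / ((real k + 1) * (real k + \<nu> + 1))"
    using assms by (simp add: bc_Suc abs_divide abs_mult)
  also have "\<dots> \<le> \<bar>bc \<nu> k\<bar> / (real k + 1)"
  proof -
    have p: "0 < real k + \<nu> + 1" "0 < real k + 1" using assms by auto
    have "(real k + 1) * 1 \<le> (real k + 1) * (real k + \<nu> + 1)"
      using p assms by (intro mult_left_mono) auto
    then show ?thesis using p by (intro divide_left_mono) (auto intro!: mult_pos_pos)
  qed
  also have "\<dots> \<le> (\<bar>bc \<nu> 0\<bar> / fact k) / (real k + 1)"
    using Suc by (intro divide_right_mono) auto
  also have "\<dots> = \<bar>bc \<nu> 0\<bar> / fact (Suc k)" by (simp add: field_simps)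
  finally show ?case .
qed

lemma bc_summable: assumes "0 \<le> \<nu>" shows "summable (\<lambda>k. bc \<nu> k * z^k)"
proof (rule summable_comparison_test')
  show "summable (\<lambda>k. \<bar>bc \<nu> 0\<bar> * (inverse (fact k) * \<bar>z\<bar>^k))"
    by (intro summable_mult summable_exp)
  fix k show "norm (bc \<nu> k * z^k) \<le> \<bar>bc \<nu> 0\<bar> * (inverse (fact k) * \<bar>z\<bar>^k)"
  proof -
    have "\<bar>bc \<nu> k\<bar> * \<bar>z\<bar>^k \<le> (\<bar>bc \<nu> 0\<bar> * inverse (fact k)) * \<bar>z\<bar>^k"
      using bc_bound[OF assms, of k] by (intro mult_right_mono) (auto simp: divide_inverse)
    then show ?thesis by (simp add: abs_mult power_abs mult.assoc)
  qed
qed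

definition bG :: "real \<Rightarrow> real \<Rightarrow> real" where "bG \<nu> z = (\<Sum>k. bc \<nu> k * z^k)"
definition bG1 :: "real \<Rightarrow> real \<Rightarrow> real" where "bG1 \<nu> z = (\<Sum>k. diffs (bc \<nu>) k * z^k)"
definition bG2 :: "real \<Rightarrow> real \<Rightarrow> real" where "bG2 \<nu> z = (\<Sum>k. diffs (diffs (bc \<nu>)) k * z^k)"

lemma sum1: "0 \<le> \<nu> \<Longrightarrow> summable (\<lambda>k. diffs (bc \<nu>) k * z^k)"
  by (intro termdiff_converges_all bc_summable)
lemma sum2: "0 \<le> \<nu> \<Longrightarrow> summable (\<lambda>k. diffs (diffs (bc \<nu>)) k * z^k)"
  by (intro termdiff_converges_all sum1)

lemma bG_deriv: "0 \<le> \<nu> \<Longrightarrow> (bG \<nu> has_real_derivative bG1 \<nu> z) (at z)"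
  unfolding bG_def[abs_def] bG1_def
  by (intro termdiffs_strong_converges_everywhere bc_summable)
lemma bG1_deriv: "0 \<le> \<nu> \<Longrightarrow> (bG1 \<nu> has_real_derivative bG2 \<nu> z) (at z)"
  unfolding bG1_def[abs_def] bG2_def
  by (intro termdiffs_strong_converges_everywhere sum1)

lemma bG_ode: assumes "0 \<le> \<nu>"
  shows "z * bG2 \<nu> z + (\<nu> + 1) * bG1 \<nu> z + bG \<nu> z = 0"
proof -
  define a where "a = diffs (bc \<nu>)"
  have s0: "summable (\<lambda>k. bc \<nu> k * z^k)" by (rule bc_summable[OF assms])
  have s1: "summable (\<lambda>k. a k * z^k)" unfolding a_def by (rule sum1[OF assms])
  have s2: "summable (\<lambda>k. diffs a k * z^k)" unfolding a_def by (rule sum2[OF assms])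
  define f where "f k = real k * a k * z^k" for k
  have fS: "f (Suc k) = z * (diffs a k * z^k)" for k
    by (simp add: f_def diffs_def algebra_simps)
  have sf: "summable f"
  proof -
    have "summable (\<lambda>k. f (Suc k))" unfolding fS by (intro summable_mult s2)
    then show ?thesis by (simp add: summable_Suc_iff)
  qed
  have zG2: "z * bG2 \<nu> z = suminf f"
  proof -
    have "z * bG2 \<nu> z = (\<Sum>k. f (Suc k))"
      unfolding fS bG2_def a_def by (rule suminf_mult[symmetric]) (rule sum2[OF assms])
    also have "\<dots> = suminf f - f 0" by (rule suminf_split_head[OF sf])
    finally show ?thesis by (simp add: f_def)
  qed
  have "z * bG2 \<nu> z + (\<nu> + 1) * bG1 \<nu> z + bG \<nu> z
      = (\<Sum>k. f k + (\<nu> + 1) * (a k * z^k) + bc \<nu> k * z^k)"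
    unfolding zG2 bG1_def bG_def a_def[symmetric]
    by (subst suminf_add[OF _ s0, symmetric], intro summable_add sf summable_mult s1)
       (subst suminf_add[OF sf, symmetric], intro summable_mult s1, simp add: suminf_mult s1)
  also have "\<dots> = (\<Sum>k. 0)"
  proof (intro arg_cong[where f=suminf] ext)
    fix k
    have "a k = (real k + 1) * bc \<nu> (Suc k)" by (simp add: a_def diffs_def)
    also have "\<dots> = - bc \<nu> k / (real k + \<nu> + 1)"
    proof -
      have "real k + \<nu> + 1 > 0" "real k + 1 > 0" using assms by auto
      then show ?thesis using assms by (simp add: bc_Suc)
    qed
    finally have ak: "a k = - bc \<nu> k / (real k + \<nu> + 1)" .
    have "real k + \<nu> + 1 > 0" using assms by simp
    then have e: "(real k + \<nu> + 1) * a k = - bc \<nu> k" by (simp add: ak)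
    have "f k + (\<nu> + 1) * (a k * z^k) + bc \<nu> k * z^k
        = ((real k + \<nu> + 1) * a k) * z^k + bc \<nu> k * z^k"
      by (simp add: f_def algebra_simps)
    then show "f k + (\<nu> + 1) * (a k * z^k) + bc \<nu> k * z^k = 0"
      unfolding e by simp
  qed
  finally show ?thesis by simp
qed

definition JJ :: "real \<Rightarrow> real \<Rightarrow> real" where
  "JJ \<nu> x = (x/2) powr \<nu> * bG \<nu> ((x/2)^2)"
definition YY :: "real \<Rightarrow> real \<Rightarrow> real" where
  "YY \<nu> x = (x/2) powr \<nu> * (\<nu> * bG \<nu> ((x/2)^2) + 2 * (x/2)^2 * bG1 \<nu> ((x/2)^2))"

lemma besselJ_eq: assumes "0 \<le> \<nu>" "0 < x" shows "besselJ \<nu> x = JJ \<nu> x"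
proof -
  have "(x/2) powr (2 * real k + \<nu>) = (x/2) powr \<nu> * ((x/2)^2)^k" for k
  proof -
    have "(x/2) powr (2 * real k) = (x/2) powr (real (2*k))" by simp
    also have "\<dots> = (x/2)^(2*k)" using assms by (intro powr_realpow) auto
    finally show ?thesis by (simp add: powr_add power_mult)
  qed
  then have "besselJ \<nu> x = (\<Sum>k. (x/2) powr \<nu> * (bc \<nu> k * ((x/2)^2)^k))"
    unfolding besselJ_def bc_def by (simp add: algebra_simps)
  also have "\<dots> = (x/2) powr \<nu> * bG \<nu> ((x/2)^2)"
    unfolding bG_def by (rule suminf_mult) (rule bc_summable[OF assms(1)])
  finally show ?thesis by (simp add: JJ_def)
qed

lemma P_deriv: assumes "0 < x"
  shows "((\<lambda>x. (x/2) powr \<nu>) has_real_derivative (\<nu> / x) * (x/2) powr \<nu>) (at x)"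
proof -
  have "((\<lambda>x. (x/2) powr \<nu>) has_real_derivative \<nu> * (x/2) powr (\<nu> - 1) * (1/2)) (at x)"
  proof -
    have h: "((\<lambda>x::real. x/2) has_real_derivative 1/2) (at x)"
      using DERIV_cdivide[OF DERIV_ident, of 2 x] by simp
    show ?thesis using DERIV_chain2[OF has_real_derivative_powr[of "x/2" \<nu>] h] assms by simp
  qed
  moreover have "\<nu> * (x/2) powr (\<nu> - 1) * (1/2) = (\<nu> / x) * (x/2) powr \<nu>"
    using assms by (simp add: powr_diff field_simps)
  ultimately show ?thesis by simp
qed

lemma q_deriv: "((\<lambda>x::real. (x/2)^2) has_real_derivative x/2) (at x)"
proof -
  have "((\<lambda>x::real. x * x / 4) has_real_derivative (1 * x + 1 * x) / 4) (at x)"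
    by (intro DERIV_cdivide DERIV_mult DERIV_ident)
  then show ?thesis by (simp add: power2_eq_square field_simps)
qed

lemma bG_chain: "0 \<le> \<nu> \<Longrightarrow> (g has_real_derivative g') (at x) \<Longrightarrow>
   ((\<lambda>x. bG \<nu> (g x)) has_real_derivative bG1 \<nu> (g x) * g') (at x)"
  by (rule DERIV_chain2[OF bG_deriv])
lemma bG1_chain: "0 \<le> \<nu> \<Longrightarrow> (g has_real_derivative g') (at x) \<Longrightarrow>
   ((\<lambda>x. bG1 \<nu> (g x)) has_real_derivative bG2 \<nu> (g x) * g') (at x)"
  by (rule DERIV_chain2[OF bG1_deriv])

lemma JJ_deriv: assumes "0 \<le> \<nu>" "0 < x"
  shows "(JJ \<nu> has_real_derivative YY \<nu> x / x) (at x)"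
  unfolding JJ_def[abs_def]
  apply (rule DERIV_cong)
   apply (rule DERIV_mult P_deriv bG_chain q_deriv assms)+
  using assms apply (simp add: YY_def field_simps power2_eq_square)
  done

lemma YY_deriv: assumes "0 \<le> \<nu>" "0 < x"
  shows "(YY \<nu> has_real_derivative - (x^2 - \<nu>^2) / x * JJ \<nu> x) (at x)"
proof -
  have qpos: "(x/2)^2 > 0" using assms by simp
  have ode: "bG2 \<nu> ((x/2)^2) = (- (\<nu> + 1) * bG1 \<nu> ((x/2)^2) - bG \<nu> ((x/2)^2)) / (x/2)^2"
    using bG_ode[OF assms(1), of "(x/2)^2"] qpos by (simp add: field_simps)
  show ?thesis
    unfolding YY_def[abs_def]
    apply (rule DERIV_cong)
     apply (rule DERIV_const DERIV_mult DERIV_add P_deriv bG_chain bG1_chain q_deriv assms)+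
    apply (simp only: ode)
    using assms apply (simp add: JJ_def field_simps power2_eq_square)
    done
qed

definition WW :: "real \<Rightarrow> real \<Rightarrow> real" where
  "WW \<nu> x = (YY \<nu> x * YY \<nu> x + JJ \<nu> x * YY \<nu> x + (1/2 - \<nu>^2) * (JJ \<nu> x * JJ \<nu> x)) / x
            + x * (JJ \<nu> x * JJ \<nu> x)"

lemma WW_deriv: assumes "0 \<le> \<nu>" "0 < x"
  shows "(WW \<nu> has_real_derivative (2 * \<nu>^2 - 1/2) * (JJ \<nu> x * JJ \<nu> x) / x^2) (at x)"
proof -
  have x0: "x \<noteq> 0" using assms by simp
  show ?thesis
    unfolding WW_def[abs_def]
    apply (rule DERIV_cong)
     apply (rule DERIV_const DERIV_ident DERIV_add DERIV_mult DERIV_divide JJ_deriv YY_deriv assms x0)+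
    using assms apply (simp add: field_simps power2_eq_square)
    done
qed

lemma WW_coercive: assumes "0 \<le> \<nu>" "1 + 2 * \<bar>1/2 - \<nu>^2\<bar> \<le> x"
  shows "YY \<nu> x ^ 2 / (2 * x) + x * JJ \<nu> x ^ 2 / 4 \<le> WW \<nu> x"
proof -
  define c where "c = 1/2 - \<nu>^2"
  define J where "J = JJ \<nu> x"
  define Y where "Y = YY \<nu> x"
  have cx: "1 + 2 * \<bar>c\<bar> \<le> x" using assms by (simp add: c_def)
  have "0 \<le> \<bar>c\<bar>" by simp
  then have x1: "1 \<le> x" using cx by linarith
  have xW: "x * WW \<nu> x = Y^2 + J * Y + c * J^2 + x^2 * J^2"
    using x1 by (simp add: WW_def J_def Y_def c_def field_simps power2_eq_square)
  have xx: "x \<le> x^2" using x1 by (simp add: power2_eq_square)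
  have "1 + 2 * \<bar>c\<bar> \<le> x^2" using cx xx by linarith
  then have k: "0 \<le> (3/4) * x^2 - 1/2 + c" by (auto simp: abs_if split: if_splits)
  have "Y^2 / 2 + J * Y + c * J^2 + (3/4) * x^2 * J^2 = (Y + J)^2 / 2 + J^2 * ((3/4) * x^2 - 1/2 + c)"
    by (simp add: power2_eq_square algebra_simps)
  also have "\<dots> \<ge> 0" using k by simp
  finally have "Y^2 / 2 + x^2 * J^2 / 4 \<le> x * WW \<nu> x" unfolding xW by simp
  then have "(Y^2 / 2 + x^2 * J^2 / 4) / x \<le> WW \<nu> x" using x1 by (simp add: field_simps)
  also have "(Y^2 / 2 + x^2 * J^2 / 4) / x = Y^2 / (2 * x) + x * J^2 / 4"
    using x1 by (simp add: field_simps power2_eq_square)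
  finally show ?thesis by (simp add: J_def Y_def)
qed

lemma WW_large: assumes "0 \<le> \<nu>"
  obtains x0 M where "1 \<le> x0" "\<And>x. x0 \<le> x \<Longrightarrow> YY \<nu> x ^ 2 / (2 * x) + x * JJ \<nu> x ^ 2 / 4 \<le> M"
proof -
  define x0 where "x0 = 1 + 2 * \<bar>1/2 - \<nu>^2\<bar>"
  define K where "K = 4 * \<bar>2 * \<nu>^2 - 1/2\<bar>"
  define L where "L = K / 2"
  define \<Phi> where "\<Phi> x = WW \<nu> x * exp (L / (x * x))" for x
  have x01: "1 \<le> x0" by (simp add: x0_def)
  have coer: "YY \<nu> x ^ 2 / (2 * x) + x * JJ \<nu> x ^ 2 / 4 \<le> WW \<nu> x" if "x0 \<le> x" for x
    using WW_coercive[OF assms, of x] that unfolding x0_def by simp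
  have J2: "JJ \<nu> x * JJ \<nu> x \<le> 4 * WW \<nu> x / x" if "x0 \<le> x" for x
  proof -
    have xp: "0 < x" using that x01 by simp
    have "0 \<le> YY \<nu> x ^ 2 / (2 * x)" using xp by simp
    then have "x * JJ \<nu> x ^ 2 / 4 \<le> WW \<nu> x" using coer[OF that] by linarith
    then show ?thesis using xp by (simp add: field_simps power2_eq_square)
  qed
  have Wnn: "0 \<le> WW \<nu> x" if "x0 \<le> x" for x
  proof -
    have xp: "0 < x" using that x01 by simp
    have "0 \<le> YY \<nu> x ^ 2 / (2 * x) + x * JJ \<nu> x ^ 2 / 4" using xp by simp
    then show ?thesis using coer[OF that] by linarith
  qed
  have dec: "\<Phi> b \<le> \<Phi> a" if "x0 \<le> a" "a \<le> b" for a b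
  proof (rule DERIV_nonpos_imp_nonincreasing[OF that(2)])
    fix x assume x: "a \<le> x" "x \<le> b"
    then have xx: "x0 \<le> x" using that by simp
    then have xp: "0 < x" using x01 by simp
    have xn: "x \<noteq> 0" using xp by simp
    define e where "e = exp (L / (x * x))"
    define J where "J = JJ \<nu> x"
    define W where "W = WW \<nu> x"
    have d0: "(\<Phi> has_real_derivative (2 * \<nu>^2 - 1/2) * (J * J) / x^2 * e
        + e * ((0 * (x * x) - L * (1 * x + 1 * x)) / (x * x * (x * x))) * W) (at x)"
      unfolding \<Phi>_def[abs_def] e_def J_def W_def
      by (rule DERIV_mult WW_deriv assms xp DERIV_chain2[OF DERIV_exp] DERIV_divide DERIV_const
           DERIV_ident | simp add: xn)+
    have "(2 * \<nu>^2 - 1/2) * (J * J) / x^2 * e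
        + e * ((0 * (x * x) - L * (1 * x + 1 * x)) / (x * x * (x * x))) * W
        = e * ((2 * \<nu>^2 - 1/2) * (J * J) / x^2 - 2 * L * W / x^3)"
      using xp by (simp add: field_simps power2_eq_square power3_eq_cube)
    with d0 have d: "(\<Phi> has_real_derivative e * ((2 * \<nu>^2 - 1/2) * (J * J) / x^2 - 2 * L * W / x^3)) (at x)"
      by simp
    have "(2 * \<nu>^2 - 1/2) * (J * J) / x^2 \<le> \<bar>2 * \<nu>^2 - 1/2\<bar> * (J * J) / x^2"
      using xp by (intro divide_right_mono mult_right_mono) auto
    also have "\<dots> \<le> \<bar>2 * \<nu>^2 - 1/2\<bar> * (4 * W / x) / x^2"
      using J2[OF xx] xp unfolding J_def W_def by (intro divide_right_mono mult_left_mono) auto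
    also have "\<dots> = 2 * L * W / x^3"
      using xp by (simp add: L_def K_def field_simps power2_eq_square power3_eq_cube)
    finally have "(2 * \<nu>^2 - 1/2) * (J * J) / x^2 - 2 * L * W / x^3 \<le> 0" by simp
    moreover have "0 < e" by (simp add: e_def)
    ultimately show "\<exists>y. (\<Phi> has_real_derivative y) (at x) \<and> y \<le> 0"
      using d by (intro exI[of _ "e * ((2 * \<nu>^2 - 1/2) * (J * J) / x^2 - 2 * L * W / x^3)"])
         (auto simp: mult_nonneg_nonpos)
  qed
  show ?thesis
  proof (rule that[OF x01])
    fix x assume x: "x0 \<le> x"
    have "YY \<nu> x ^ 2 / (2 * x) + x * JJ \<nu> x ^ 2 / 4 \<le> WW \<nu> x" by (rule coer[OF x])
    also have "\<dots> \<le> WW \<nu> x * exp (L / (x * x))"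
      using Wnn[OF x] by (intro mult_le_cancel_left1[THEN iffD2] impI) (auto simp: L_def K_def)
    also have "\<dots> \<le> \<Phi> x0" using dec[OF order_refl x] by (simp add: \<Phi>_def)
    finally show "YY \<nu> x ^ 2 / (2 * x) + x * JJ \<nu> x ^ 2 / 4 \<le> \<Phi> x0" .
  qed
qed

lemma bG_bounded: assumes "0 \<le> \<nu>" shows "\<exists>B. \<forall>z\<in>{0..q}. \<bar>bG \<nu> z\<bar> \<le> B"
proof -
  have "continuous_on {0..q} (bG \<nu>)"
    by (intro continuous_at_imp_continuous_on ballI DERIV_isCont[OF bG_deriv[OF assms]])
  then have "bounded (bG \<nu> ` {0..q})" by (intro compact_imp_bounded compact_continuous_image) auto
  then show ?thesis unfolding bounded_iff by auto
qed

lemma bG1_bounded: assumes "0 \<le> \<nu>" shows "\<exists>B. \<forall>z\<in>{0..q}. \<bar>bG1 \<nu> z\<bar> \<le> B"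
proof -
  have "continuous_on {0..q} (bG1 \<nu>)"
    by (intro continuous_at_imp_continuous_on ballI DERIV_isCont[OF bG1_deriv[OF assms]])
  then have "bounded (bG1 \<nu> ` {0..q})" by (intro compact_imp_bounded compact_continuous_image) auto
  then show ?thesis unfolding bounded_iff by auto
qed

lemma bessel_small: assumes "0 \<le> \<nu>"
  shows "\<exists>B. \<forall>x. 0 < x \<and> x \<le> x0 \<longrightarrow> \<bar>JJ \<nu> x\<bar> \<le> B \<and> \<bar>YY \<nu> x\<bar> \<le> B"
proof -
  define q0 where "q0 = (x0/2)^2"
  obtain B0 where B0: "\<forall>z\<in>{0..q0}. \<bar>bG \<nu> z\<bar> \<le> B0" using bG_bounded[OF assms] by blast
  obtain B1 where B1: "\<forall>z\<in>{0..q0}. \<bar>bG1 \<nu> z\<bar> \<le> B1" using bG1_bounded[OF assms] by blast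
  define P0 where "P0 = (x0/2) powr \<nu>"
  show ?thesis
  proof (intro exI[of _ "P0 * B0 + P0 * (\<nu> * B0 + 2 * q0 * B1)"] allI impI conjI)
    fix x :: real assume x: "0 < x \<and> x \<le> x0"
    have qx: "(x/2)^2 \<in> {0..q0}" using x unfolding q0_def by (auto intro!: power_mono)
    have Pn: "0 \<le> (x/2) powr \<nu>" by simp
    have Px: "(x/2) powr \<nu> \<le> P0" unfolding P0_def using x assms by (intro powr_mono2) auto
    have b0: "\<bar>bG \<nu> ((x/2)^2)\<bar> \<le> B0" using B0 qx by blast
    have b1: "\<bar>bG1 \<nu> ((x/2)^2)\<bar> \<le> B1" using B1 qx by blast
    have B0n: "0 \<le> B0" using b0 by linarith
    have B1n: "0 \<le> B1" using b1 by linarith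
    have P0n: "0 \<le> P0" using Pn Px by linarith
    have q0n: "0 \<le> q0" by (simp add: q0_def)
    have qq: "(x/2)^2 \<le> q0" using qx by simp
    have jb: "\<bar>JJ \<nu> x\<bar> \<le> P0 * B0"
      unfolding JJ_def abs_mult using Pn Px b0 P0n by (intro mult_mono) auto
    have "\<bar>\<nu> * bG \<nu> ((x/2)^2) + 2 * (x/2)^2 * bG1 \<nu> ((x/2)^2)\<bar>
        \<le> \<nu> * \<bar>bG \<nu> ((x/2)^2)\<bar> + 2 * (x/2)^2 * \<bar>bG1 \<nu> ((x/2)^2)\<bar>"
      by (rule order_trans[OF abs_triangle_ineq]) (use assms in \<open>simp add: abs_mult\<close>)
    also have "\<dots> \<le> \<nu> * B0 + 2 * q0 * B1"
      using assms b0 b1 qq B1n q0n by (intro add_mono mult_left_mono mult_mono) auto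
    finally have yb0: "\<bar>\<nu> * bG \<nu> ((x/2)^2) + 2 * (x/2)^2 * bG1 \<nu> ((x/2)^2)\<bar> \<le> \<nu> * B0 + 2 * q0 * B1" .
    have yb: "\<bar>YY \<nu> x\<bar> \<le> P0 * (\<nu> * B0 + 2 * q0 * B1)"
      unfolding YY_def abs_mult using Pn Px yb0 P0n by (intro mult_mono) auto
    have "0 \<le> P0 * (\<nu> * B0 + 2 * q0 * B1)" using P0n assms B0n B1n q0n by simp
    moreover have "0 \<le> P0 * B0" using P0n B0n by simp
    ultimately show "\<bar>JJ \<nu> x\<bar> \<le> P0 * B0 + P0 * (\<nu> * B0 + 2 * q0 * B1)"
      "\<bar>YY \<nu> x\<bar> \<le> P0 * B0 + P0 * (\<nu> * B0 + 2 * q0 * B1)" using jb yb by linarith+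
  qed
qed

lemma bessel_bounds: assumes "0 \<le> \<nu>"
  shows "\<exists>C. \<forall>x>0. JJ \<nu> x ^ 2 * (1 + x) \<le> C \<and> YY \<nu> x ^ 2 \<le> C * (1 + x)"
proof -
  obtain x0 M where x0: "1 \<le> x0" and M: "\<And>x. x0 \<le> x \<Longrightarrow> YY \<nu> x ^ 2 / (2 * x) + x * JJ \<nu> x ^ 2 / 4 \<le> M"
    using WW_large[OF assms] by blast
  obtain B where B: "\<forall>x. 0 < x \<and> x \<le> x0 \<longrightarrow> \<bar>JJ \<nu> x\<bar> \<le> B \<and> \<bar>YY \<nu> x\<bar> \<le> B"
    using bessel_small[OF assms] by blast
  have "0 \<le> YY \<nu> x0 ^ 2 / (2 * x0) + x0 * JJ \<nu> x0 ^ 2 / 4" using x0 by simp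
  then have Mn: "0 \<le> M" using M[OF order_refl] by linarith
  show ?thesis
  proof (intro exI[of _ "8 * M + B^2 * (1 + x0)"] allI impI conjI)
    fix x :: real assume xp: "0 < x"
    have big: "JJ \<nu> x ^ 2 * (1 + x) \<le> 8 * M \<and> YY \<nu> x ^ 2 \<le> 2 * M * (1 + x)" if xx: "x0 \<le> x"
    proof -
      have x1: "1 \<le> x" using xx x0 by simp
      have a: "0 \<le> YY \<nu> x ^ 2 / (2 * x)" "0 \<le> x * JJ \<nu> x ^ 2 / 4" using x1 by auto
      have "x * JJ \<nu> x ^ 2 / 4 \<le> M" using M[OF xx] a by linarith
      then have j: "x * JJ \<nu> x ^ 2 \<le> 4 * M" by simp
      have "YY \<nu> x ^ 2 / (2 * x) \<le> M" using M[OF xx] a by linarith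
      then have y: "YY \<nu> x ^ 2 \<le> 2 * M * x" using x1 by (simp add: field_simps)
      have "JJ \<nu> x ^ 2 * (1 + x) \<le> JJ \<nu> x ^ 2 * (2 * x)" using x1 by (intro mult_left_mono) auto
      also have "\<dots> = 2 * (x * JJ \<nu> x ^ 2)" by simp
      also have "\<dots> \<le> 8 * M" using j by simp
      finally have "JJ \<nu> x ^ 2 * (1 + x) \<le> 8 * M" .
      moreover have "2 * M * x \<le> 2 * M * (1 + x)" using Mn by (intro mult_left_mono) auto
      ultimately show ?thesis using y by simp
    qed
    have small: "JJ \<nu> x ^ 2 * (1 + x) \<le> B^2 * (1 + x0) \<and> YY \<nu> x ^ 2 \<le> B^2 * (1 + x)" if xx: "x \<le> x0"
    proof -
      have b: "\<bar>JJ \<nu> x\<bar> \<le> B" "\<bar>YY \<nu> x\<bar> \<le> B" using B xp xx by auto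
      have j2: "JJ \<nu> x ^ 2 \<le> B^2" using b(1) by (metis abs_le_square_iff abs_of_nonneg abs_ge_zero order.trans power2_abs)
      have y2: "YY \<nu> x ^ 2 \<le> B^2" using b(2) by (metis abs_le_square_iff abs_of_nonneg abs_ge_zero order.trans power2_abs)
      have "JJ \<nu> x ^ 2 * (1 + x) \<le> B^2 * (1 + x0)" using j2 xx xp by (intro mult_mono) auto
      moreover have "B^2 * 1 \<le> B^2 * (1 + x)" using xp by (intro mult_left_mono) auto
      ultimately show ?thesis using y2 by linarith
    qed
    have n1: "0 \<le> B^2 * (1 + x0)" using x0 by simp
    have n2: "0 \<le> B^2 * (1 + x)" using xp by simp
    have "B^2 * (1 + x) * 1 \<le> B^2 * (1 + x) * (1 + x0)" using x0 xp by (intro mult_left_mono) auto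
    then have n3: "B^2 * (1 + x) \<le> B^2 * (1 + x0) * (1 + x)" by (simp add: mult_ac)
    have "8 * M * 1 \<le> 8 * M * (1 + x)" using Mn xp by (intro mult_left_mono) auto
    then have n4: "8 * M \<le> 8 * M * (1 + x)" by simp
    show "JJ \<nu> x ^ 2 * (1 + x) \<le> 8 * M + B^2 * (1 + x0)"
      using big small n1 Mn by (cases "x0 \<le> x") auto
    show "YY \<nu> x ^ 2 \<le> (8 * M + B^2 * (1 + x0)) * (1 + x)"
    proof -
      have eq: "(8 * M + B^2 * (1 + x0)) * (1 + x) = 8 * M * (1 + x) + B^2 * (1 + x0) * (1 + x)"
        by (simp add: algebra_simps)
      have n5: "0 \<le> B^2 * (1 + x0) * (1 + x)" using x0 xp by simp
      have n6: "0 \<le> 8 * M * (1 + x)" using Mn xp by simp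
      have n7: "2 * M * (1 + x) \<le> 8 * M * (1 + x)" using Mn xp by (intro mult_right_mono) auto
      show ?thesis
      proof (cases "x0 \<le> x")
        case True then show ?thesis unfolding eq using big[OF True] n5 n7 by linarith
      next
        case False then show ?thesis unfolding eq using small n3 n6 by linarith
      qed
    qed
  qed
qed

lemma besselJ_deriv: assumes "0 \<le> \<nu>" "0 < x"
  shows "(besselJ \<nu> has_real_derivative YY \<nu> x / x) (at x)"
  by (rule has_field_derivative_transform_within_open[OF JJ_deriv[OF assms], of "{0<..}"])
     (use assms besselJ_eq in auto)

lemma YYb_deriv: assumes "0 \<le> \<nu>" "0 < x"
  shows "(YY \<nu> has_real_derivative - (x^2 - \<nu>^2) / x * besselJ \<nu> x) (at x)"
  using YY_deriv[OF assms] besselJ_eq[OF assms] by simp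

lemma J_chain: "0 \<le> \<nu> \<Longrightarrow> (g has_real_derivative g') (at E) \<Longrightarrow> 0 < g E \<Longrightarrow>
  ((\<lambda>E. besselJ \<nu> (g E)) has_real_derivative YY \<nu> (g E) / g E * g') (at E)"
  by (rule DERIV_chain2[OF besselJ_deriv])
lemma Y_chain: "0 \<le> \<nu> \<Longrightarrow> (g has_real_derivative g') (at E) \<Longrightarrow> 0 < g E \<Longrightarrow>
  ((\<lambda>E. YY \<nu> (g E)) has_real_derivative - ((g E)^2 - \<nu>^2) / g E * besselJ \<nu> (g E) * g') (at E)"
  by (rule DERIV_chain2[OF YYb_deriv])
lemma x_deriv: "0 < E \<Longrightarrow> ((\<lambda>E. sqrt E * r) has_real_derivative inverse (sqrt E) / 2 * r) (at E)"
  by (rule DERIV_cmult_right[OF DERIV_real_sqrt])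

fun FF :: "real \<Rightarrow> nat \<Rightarrow> real \<Rightarrow> real \<Rightarrow> real" where
  "FF \<nu> 0 E r = besselJ \<nu> (sqrt E * r)"
| "FF \<nu> (Suc 0) E r = YY \<nu> (sqrt E * r) / (2 * E)"
| "FF \<nu> (Suc (Suc 0)) E r = (- 2 * YY \<nu> (sqrt E * r) - ((sqrt E * r)^2 - \<nu>^2) * besselJ \<nu> (sqrt E * r)) / (4 * E^2)"
| "FF \<nu> (Suc (Suc (Suc 0))) E r = ((8 + \<nu>^2 - (sqrt E * r)^2) * YY \<nu> (sqrt E * r)
      + (4 * (sqrt E * r)^2 - 6 * \<nu>^2) * besselJ \<nu> (sqrt E * r)) / (8 * E^3)"
| "FF \<nu> (Suc (Suc (Suc (Suc n)))) E r = 0"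

lemma FF_deriv_s: assumes "0 \<le> \<nu>" "0 < s" "0 < r" "j < 3"
  shows "((\<lambda>E. FF \<nu> j E r) has_real_derivative FF \<nu> (Suc j) (s * s) r) (at (s * s))"
proof -
  have ss: "sqrt (s * s) = s" using assms(2) by simp
  have Ep: "0 < s * s" using assms(2) by simp
  have xp: "0 < sqrt (s * s) * r" using assms by simp
  have En: "2 * (s * s) \<noteq> 0" "4 * (s * s)^2 \<noteq> 0" "8 * (s * s)^3 \<noteq> 0" using assms by auto
  obtain J Y where jy: "besselJ \<nu> (s * r) = J" "YY \<nu> (s * r) = Y" by blast
  consider "j = 0" | "j = Suc 0" | "j = Suc (Suc 0)" using assms(4) by linarith
  then show ?thesis
  proof cases
    case 1
    show ?thesis unfolding 1 FF.simps
      apply (rule DERIV_cong)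
       apply (rule J_chain x_deriv assms xp Ep)+
      unfolding ss jy using assms(2,3) by (simp add: field_simps)
  next
    case 2
    show ?thesis unfolding 2 FF.simps
      apply (rule DERIV_cong)
       apply (rule DERIV_const x_deriv J_chain Y_chain DERIV_divide DERIV_diff DERIV_add DERIV_mult
          DERIV_power DERIV_ident assms xp Ep En)+
      unfolding ss jy using assms(2,3) by (simp add: field_simps power2_eq_square)
  next
    case 3
    show ?thesis unfolding 3 FF.simps
      apply (rule DERIV_cong)
       apply (rule DERIV_const x_deriv J_chain Y_chain DERIV_divide DERIV_diff DERIV_add DERIV_mult
          DERIV_power DERIV_ident assms xp Ep En)+
      unfolding ss jy using assms(2,3) by (simp add: field_simps power2_eq_square power3_eq_cube)
  qed
qed

lemma FF_deriv: assumes "0 \<le> \<nu>" "0 < E" "0 < r" "j < 3"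
  shows "((\<lambda>E. FF \<nu> j E r) has_real_derivative FF \<nu> (Suc j) E r) (at E)"
proof -
  have e: "sqrt E * sqrt E = E" using assms(2) by simp
  show ?thesis using FF_deriv_s[OF assms(1) _ assms(3,4), of "sqrt E"] assms(2) unfolding e by simp
qed

lemma poly2: "0 \<le> (x::real) \<Longrightarrow> 2 * (1 + x) + (x^2 + \<nu>^2) \<le> (2 + \<nu>^2) * (1 + x)^2"
proof -
  assume x: "0 \<le> x"
  have "(2 + \<nu>^2) * (1 + x)^2 - (2 * (1 + x) + (x^2 + \<nu>^2)) = 2*x + x^2 + \<nu>^2 * (2*x + x^2)"
    by (simp add: power2_eq_square algebra_simps)
  also have "\<dots> \<ge> 0" using x by simp
  finally show ?thesis by simp
qed

lemma poly3: "0 \<le> (x::real) \<Longrightarrow> (8 + \<nu>^2 + x^2) * (1 + x) + (4 * x^2 + 6 * \<nu>^2) \<le> (12 + 7 * \<nu>^2) * (1 + x)^3"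
proof -
  assume x: "0 \<le> x"
  have "(12 + 7 * \<nu>^2) * (1 + x)^3 - ((8 + \<nu>^2 + x^2) * (1 + x) + (4 * x^2 + 6 * \<nu>^2))
     = 4 + 28*x + 31*x^2 + 11*x^3 + \<nu>^2 * (20*x + 21*x^2 + 7*x^3)"
    by (simp add: power2_eq_square power3_eq_cube algebra_simps)
  also have "\<dots> \<ge> 0" using x by simp
  finally show ?thesis by simp
qed

lemma core_bounds:
  fixes J Y x sq c E e1 :: real
  assumes "0 \<le> \<nu>" "0 < e1" "e1 \<le> E" "0 < x" "sq * sq = 1 + x" "0 \<le> sq"
    and J: "\<bar>J\<bar> * sq \<le> c" and Y: "\<bar>Y\<bar> \<le> c * sq"
  shows "\<bar>Y / (2 * E)\<bar> * sq \<le> c / (2 * e1) * (1 + x)"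
    and "\<bar>(- 2 * Y - (x^2 - \<nu>^2) * J) / (4 * E^2)\<bar> * sq \<le> c * (2 + \<nu>^2) / (4 * e1^2) * (1 + x)^2"
    and "\<bar>((8 + \<nu>^2 - x^2) * Y + (4 * x^2 - 6 * \<nu>^2) * J) / (8 * E^3)\<bar> * sq
           \<le> c * (12 + 7 * \<nu>^2) / (8 * e1^3) * (1 + x)^3"
proof -
  have Ep: "0 < E" using assms by simp
  have c0: "0 \<le> c" using J assms(6) by (meson abs_ge_zero mult_nonneg_nonneg order.trans)
  have Ysq: "\<bar>Y\<bar> * sq \<le> c * (1 + x)" using mult_right_mono[OF Y assms(6)] assms(5) by (simp add: mult.assoc)
  have "\<bar>Y / (2 * E)\<bar> * sq = (\<bar>Y\<bar> * sq) / (2 * E)" using Ep by (simp add: abs_divide)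
  also have "\<dots> \<le> (c * (1 + x)) / (2 * E)" using Ysq Ep by (intro divide_right_mono) auto
  also have "\<dots> \<le> (c * (1 + x)) / (2 * e1)" using assms c0 by (intro divide_left_mono) auto
  finally show "\<bar>Y / (2 * E)\<bar> * sq \<le> c / (2 * e1) * (1 + x)" by simp
  have "\<bar>- 2 * Y - (x^2 - \<nu>^2) * J\<bar> * sq \<le> (2 * \<bar>Y\<bar> + (x^2 + \<nu>^2) * \<bar>J\<bar>) * sq"
  proof -
    have "\<bar>- 2 * Y - (x^2 - \<nu>^2) * J\<bar> \<le> 2 * \<bar>Y\<bar> + \<bar>x^2 - \<nu>^2\<bar> * \<bar>J\<bar>"
      by (rule order_trans[OF abs_triangle_ineq4]) (simp add: abs_mult)
    also have "\<dots> \<le> 2 * \<bar>Y\<bar> + (x^2 + \<nu>^2) * \<bar>J\<bar>"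
      using abs_triangle_ineq4[of "x^2" "\<nu>^2"] by (intro add_left_mono mult_right_mono) auto
    finally show ?thesis using assms(6) by (intro mult_right_mono) auto
  qed
  also have "\<dots> = 2 * (\<bar>Y\<bar> * sq) + (x^2 + \<nu>^2) * (\<bar>J\<bar> * sq)" by (simp add: algebra_simps)
  also have "\<dots> \<le> 2 * (c * (1 + x)) + (x^2 + \<nu>^2) * c"
    using Ysq J by (intro add_mono mult_left_mono) auto
  also have "\<dots> = c * (2 * (1 + x) + (x^2 + \<nu>^2))" by (simp add: algebra_simps)
  also have "\<dots> \<le> c * ((2 + \<nu>^2) * (1 + x)^2)" using poly2[of x \<nu>] assms c0 by (intro mult_left_mono) auto
  finally have N2: "\<bar>- 2 * Y - (x^2 - \<nu>^2) * J\<bar> * sq \<le> c * ((2 + \<nu>^2) * (1 + x)^2)" .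
  have "\<bar>(- 2 * Y - (x^2 - \<nu>^2) * J) / (4 * E^2)\<bar> * sq = (\<bar>- 2 * Y - (x^2 - \<nu>^2) * J\<bar> * sq) / (4 * E^2)"
    by (simp add: abs_divide)
  also have "\<dots> \<le> (c * ((2 + \<nu>^2) * (1 + x)^2)) / (4 * E^2)" using N2 by (intro divide_right_mono) auto
  also have "\<dots> \<le> (c * ((2 + \<nu>^2) * (1 + x)^2)) / (4 * e1^2)"
    using assms c0 by (intro divide_left_mono mult_nonneg_nonneg power_mono mult_pos_pos) auto
  finally show "\<bar>(- 2 * Y - (x^2 - \<nu>^2) * J) / (4 * E^2)\<bar> * sq \<le> c * (2 + \<nu>^2) / (4 * e1^2) * (1 + x)^2"
    by simp
  have "\<bar>(8 + \<nu>^2 - x^2) * Y + (4 * x^2 - 6 * \<nu>^2) * J\<bar> * sq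
      \<le> ((8 + \<nu>^2 + x^2) * \<bar>Y\<bar> + (4 * x^2 + 6 * \<nu>^2) * \<bar>J\<bar>) * sq"
  proof -
    have "\<bar>(8 + \<nu>^2 - x^2) * Y + (4 * x^2 - 6 * \<nu>^2) * J\<bar>
        \<le> \<bar>8 + \<nu>^2 - x^2\<bar> * \<bar>Y\<bar> + \<bar>4 * x^2 - 6 * \<nu>^2\<bar> * \<bar>J\<bar>"
      by (rule order_trans[OF abs_triangle_ineq]) (simp add: abs_mult)
    also have "\<dots> \<le> (8 + \<nu>^2 + x^2) * \<bar>Y\<bar> + (4 * x^2 + 6 * \<nu>^2) * \<bar>J\<bar>"
      using abs_triangle_ineq4[of "8 + \<nu>^2" "x^2"] abs_triangle_ineq4[of "4 * x^2" "6 * \<nu>^2"]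
      by (intro add_mono mult_right_mono) auto
    finally show ?thesis using assms(6) by (intro mult_right_mono) auto
  qed
  also have "\<dots> = (8 + \<nu>^2 + x^2) * (\<bar>Y\<bar> * sq) + (4 * x^2 + 6 * \<nu>^2) * (\<bar>J\<bar> * sq)"
    by (simp add: algebra_simps)
  also have "\<dots> \<le> (8 + \<nu>^2 + x^2) * (c * (1 + x)) + (4 * x^2 + 6 * \<nu>^2) * c"
    using Ysq J by (intro add_mono mult_left_mono) auto
  also have "\<dots> = c * ((8 + \<nu>^2 + x^2) * (1 + x) + (4 * x^2 + 6 * \<nu>^2))" by (simp add: algebra_simps)
  also have "\<dots> \<le> c * ((12 + 7 * \<nu>^2) * (1 + x)^3)" using poly3[of x \<nu>] assms c0 by (intro mult_left_mono) auto
  finally have N3: "\<bar>(8 + \<nu>^2 - x^2) * Y + (4 * x^2 - 6 * \<nu>^2) * J\<bar> * sq \<le> c * ((12 + 7 * \<nu>^2) * (1 + x)^3)" .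
  have "\<bar>((8 + \<nu>^2 - x^2) * Y + (4 * x^2 - 6 * \<nu>^2) * J) / (8 * E^3)\<bar> * sq
      = (\<bar>(8 + \<nu>^2 - x^2) * Y + (4 * x^2 - 6 * \<nu>^2) * J\<bar> * sq) / (8 * E^3)"
    using Ep by (simp add: abs_divide)
  also have "\<dots> \<le> (c * ((12 + 7 * \<nu>^2) * (1 + x)^3)) / (8 * E^3)" using N3 Ep by (intro divide_right_mono) auto
  also have "\<dots> \<le> (c * ((12 + 7 * \<nu>^2) * (1 + x)^3)) / (8 * e1^3)"
    using assms c0 by (intro divide_left_mono mult_nonneg_nonneg power_mono mult_pos_pos) auto
  finally show "\<bar>((8 + \<nu>^2 - x^2) * Y + (4 * x^2 - 6 * \<nu>^2) * J) / (8 * E^3)\<bar> * sq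
           \<le> c * (12 + 7 * \<nu>^2) / (8 * e1^3) * (1 + x)^3"
    by simp
qed

lemma FF_bound_x: assumes "0 \<le> \<nu>" "0 < e1" "j \<le> 3"
  shows "\<exists>A. \<forall>E r. e1 \<le> E \<longrightarrow> 0 < r \<longrightarrow>
     \<bar>FF \<nu> j E r\<bar> * sqrt (1 + sqrt E * r) \<le> A * (1 + sqrt E * r)^j"
proof -
  obtain C where C: "\<forall>x>0. JJ \<nu> x ^ 2 * (1 + x) \<le> C \<and> YY \<nu> x ^ 2 \<le> C * (1 + x)"
    using bessel_bounds[OF assms(1)] by blast
  define c where "c = sqrt C"
  have key: "\<bar>besselJ \<nu> x\<bar> * sqrt (1 + x) \<le> c \<and> \<bar>YY \<nu> x\<bar> \<le> c * sqrt (1 + x)" if x: "0 < x" for x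
  proof
    have "(\<bar>besselJ \<nu> x\<bar> * sqrt (1 + x))^2 = JJ \<nu> x ^ 2 * (1 + x)"
      using x besselJ_eq[OF assms(1) x] by (simp add: power_mult_distrib)
    also have "\<dots> \<le> C" using C x by blast
    finally have "sqrt ((\<bar>besselJ \<nu> x\<bar> * sqrt (1 + x))^2) \<le> sqrt C" by (rule real_sqrt_le_mono)
    then show "\<bar>besselJ \<nu> x\<bar> * sqrt (1 + x) \<le> c" by (simp add: c_def)
    have "sqrt (YY \<nu> x ^ 2) \<le> sqrt (C * (1 + x))" using C x by (intro real_sqrt_le_mono) blast
    then show "\<bar>YY \<nu> x\<bar> \<le> c * sqrt (1 + x)" by (simp add: c_def real_sqrt_mult)
  qed
  consider "j = 0" | "j = 1" | "j = 2" | "j = 3" using assms(3) by linarith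
  then show ?thesis
  proof cases
    case 1 show ?thesis
    proof (intro exI[of _ c] allI impI)
      fix E r :: real assume E: "e1 \<le> E" and r: "0 < r"
      have xp: "0 < sqrt E * r" using E r assms by simp
      show "\<bar>FF \<nu> j E r\<bar> * sqrt (1 + sqrt E * r) \<le> c * (1 + sqrt E * r)^j"
        using key[OF xp] by (simp add: 1)
    qed
  next
    case 2 show ?thesis
    proof (intro exI[of _ "c / (2 * e1)"] allI impI)
      fix E r :: real assume E: "e1 \<le> E" and r: "0 < r"
      have xp: "0 < sqrt E * r" using E r assms by simp
      show "\<bar>FF \<nu> j E r\<bar> * sqrt (1 + sqrt E * r) \<le> c / (2 * e1) * (1 + sqrt E * r)^j"
        using core_bounds(1)[OF assms(1,2) E xp _ _ key[OF xp, THEN conjunct1] key[OF xp, THEN conjunct2]] xp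
        by (simp add: 2)
    qed
  next
    case 3 show ?thesis
    proof (intro exI[of _ "c * (2 + \<nu>^2) / (4 * e1^2)"] allI impI)
      fix E r :: real assume E: "e1 \<le> E" and r: "0 < r"
      have xp: "0 < sqrt E * r" using E r assms by simp
      show "\<bar>FF \<nu> j E r\<bar> * sqrt (1 + sqrt E * r) \<le> c * (2 + \<nu>^2) / (4 * e1^2) * (1 + sqrt E * r)^j"
        using core_bounds(2)[OF assms(1,2) E xp _ _ key[OF xp, THEN conjunct1] key[OF xp, THEN conjunct2]] xp
        by (simp add: 3 numeral_2_eq_2)
    qed
  next
    case 4 show ?thesis
    proof (intro exI[of _ "c * (12 + 7 * \<nu>^2) / (8 * e1^3)"] allI impI)
      fix E r :: real assume E: "e1 \<le> E" and r: "0 < r"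
      have xp: "0 < sqrt E * r" using E r assms by simp
      show "\<bar>FF \<nu> j E r\<bar> * sqrt (1 + sqrt E * r) \<le> c * (12 + 7 * \<nu>^2) / (8 * e1^3) * (1 + sqrt E * r)^j"
        using core_bounds(3)[OF assms(1,2) E xp _ _ key[OF xp, THEN conjunct1] key[OF xp, THEN conjunct2]] xp
        by (simp add: 4 numeral_3_eq_3 numeral_2_eq_2)
    qed
  qed
qed

lemma FF_bound: assumes "0 \<le> \<nu>" "0 < e1" "j \<le> 3"
  shows "\<exists>K. \<forall>E r. e1 \<le> E \<longrightarrow> E \<le> e2 \<longrightarrow> 0 < r \<longrightarrow> \<bar>FF \<nu> j E r\<bar> * sqrt (1 + r) \<le> K * (1 + r)^j"
proof -
  obtain A where A: "\<forall>E r. e1 \<le> E \<longrightarrow> 0 < r \<longrightarrow>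
     \<bar>FF \<nu> j E r\<bar> * sqrt (1 + sqrt E * r) \<le> A * (1 + sqrt E * r)^j"
    using FF_bound_x[OF assms] by blast
  define s1 where "s1 = sqrt (1 + 1 / sqrt e1)"
  define c2 where "c2 = 1 + sqrt e2"
  show ?thesis
  proof (intro exI[of _ "s1 * \<bar>A\<bar> * c2^j"] allI impI)
    fix E r :: real assume E: "e1 \<le> E" "E \<le> e2" and r: "0 < r"
    define x where "x = sqrt E * r"
    have Ep: "0 < E" using E assms by simp
    have xp: "0 \<le> x" using Ep r by (simp add: x_def)
    have se: "sqrt e1 \<le> sqrt E" "sqrt E \<le> sqrt e2" using E by auto
    have se1: "0 < sqrt e1" using assms by simp
    have "r \<le> x / sqrt e1"
    proof -
      have "r * sqrt e1 \<le> r * sqrt E" using se r by (intro mult_left_mono) auto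
      then show ?thesis using se1 by (simp add: x_def field_simps)
    qed
    also have "\<dots> \<le> (1 + x) / sqrt e1" using se1 by (intro divide_right_mono) auto
    finally have rr: "r \<le> (1 + x) / sqrt e1" .
    have "(1 + 1 / sqrt e1) * (1 + x) = 1 + x + (1 + x) / sqrt e1" using se1 by (simp add: field_simps)
    then have "1 + r \<le> (1 + 1 / sqrt e1) * (1 + x)" using rr xp by linarith
    then have s_le: "sqrt (1 + r) \<le> s1 * sqrt (1 + x)"
      unfolding s1_def real_sqrt_mult[symmetric] by (rule real_sqrt_le_mono)
    have "x \<le> sqrt e2 * r" unfolding x_def using se r by (intro mult_right_mono) auto
    also have "\<dots> \<le> sqrt e2 * (1 + r)" using Ep E by (intro mult_left_mono) auto
    finally have x_le0: "x \<le> sqrt e2 * (1 + r)" .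
    have x_le: "1 + x \<le> c2 * (1 + r)" unfolding c2_def using x_le0 r by (simp add: algebra_simps)
    have "\<bar>FF \<nu> j E r\<bar> * sqrt (1 + r) \<le> \<bar>FF \<nu> j E r\<bar> * (s1 * sqrt (1 + x))"
      using s_le by (intro mult_left_mono) auto
    also have "\<dots> = s1 * (\<bar>FF \<nu> j E r\<bar> * sqrt (1 + x))" by simp
    also have "\<dots> \<le> s1 * (\<bar>A\<bar> * (1 + x)^j)"
    proof (intro mult_left_mono)
      have "\<bar>FF \<nu> j E r\<bar> * sqrt (1 + x) \<le> A * (1 + x)^j" using A E r by (simp add: x_def)
      also have "\<dots> \<le> \<bar>A\<bar> * (1 + x)^j" using xp by (intro mult_right_mono) auto
      finally show "\<bar>FF \<nu> j E r\<bar> * sqrt (1 + x) \<le> \<bar>A\<bar> * (1 + x)^j" .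
    qed (use se1 in \<open>simp add: s1_def\<close>)
    also have "\<dots> \<le> s1 * (\<bar>A\<bar> * (c2 * (1 + r))^j)"
      using x_le xp se1 by (intro mult_left_mono power_mono) (auto simp: s1_def)
    also have "\<dots> = s1 * \<bar>A\<bar> * c2^j * (1 + r)^j" by (simp add: power_mult_distrib)
    finally show "\<bar>FF \<nu> j E r\<bar> * sqrt (1 + r) \<le> s1 * \<bar>A\<bar> * c2^j * (1 + r)^j" .
  qed
qed

lemma deriv_integral:
  fixes f f' :: "real \<Rightarrow> 'a \<Rightarrow> real" and g :: "'a \<Rightarrow> complex" and D :: "'a \<Rightarrow> real"
  assumes ab: "a < x0" "x0 < b"
    and deriv: "\<And>x p. a < x \<Longrightarrow> x < b \<Longrightarrow> g p \<noteq> 0 \<Longrightarrow> ((\<lambda>x. f x p) has_real_derivative f' x p) (at x)"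
    and int: "\<And>x. a < x \<Longrightarrow> x < b \<Longrightarrow> integrable M (\<lambda>p. g p * of_real (f x p))"
    and meas: "(\<lambda>p. g p * of_real (f' x0 p)) \<in> borel_measurable M"
    and Dint: "integrable M D"
    and Db: "\<And>x p. a < x \<Longrightarrow> x < b \<Longrightarrow> norm (g p * of_real (f' x p)) \<le> D p"
  shows "((\<lambda>x. \<integral>p. g p * of_real (f x p) \<partial>M) has_vector_derivative (\<integral>p. g p * of_real (f' x0 p) \<partial>M)) (at x0)"
proof -
  define F where "F x = (\<integral>p. g p * of_real (f x p) \<partial>M)" for x
  define L where "L = (\<integral>p. g p * of_real (f' x0 p) \<partial>M)"
  define Q where "Q y = inverse (y - x0) *\<^sub>R (F y - F x0)" for y
  have Dnn: "0 \<le> D p" for p using Db[OF ab, of p] norm_ge_zero order_trans by blast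
  have "(Q \<longlongrightarrow> L) (at x0 within {a<..<b})"
    unfolding tendsto_at_iff_sequentially comp_def
  proof (intro allI impI)
    fix X :: "nat \<Rightarrow> real" assume X: "\<forall>i. X i \<in> {a<..<b} - {x0}" and Xl: "X \<longlonglongrightarrow> x0"
    define s where "s n p = inverse (X n - x0) *\<^sub>R (g p * of_real (f (X n) p) - g p * of_real (f x0 p))" for n p
    have Xn: "a < X n" "X n < b" "X n \<noteq> x0" for n using X by auto
    have Qs: "Q (X n) = integral\<^sup>L M (s n)" for n
      unfolding s_def Q_def F_def using int[OF Xn(1,2)] int[OF ab] by simp
    have s_eq: "s n p = g p * of_real ((f (X n) p - f x0 p) / (X n - x0))" for n p
      unfolding s_def by (simp add: scaleR_conv_of_real divide_inverse algebra_simps)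
    have "(\<lambda>n. integral\<^sup>L M (s n)) \<longlonglongrightarrow> L"
      unfolding L_def
    proof (rule integral_dominated_convergence[OF meas _ Dint])
      show "s n \<in> borel_measurable M" for n
        unfolding s_def using int[OF Xn(1,2)] int[OF ab] by measurable
      show "AE p in M. (\<lambda>n. s n p) \<longlonglongrightarrow> g p * of_real (f' x0 p)"
      proof (intro AE_I2)
        fix p show "(\<lambda>n. s n p) \<longlonglongrightarrow> g p * of_real (f' x0 p)"
        proof (cases "g p = 0")
          case True then show ?thesis by (simp add: s_eq)
        next
          case False
          have "((\<lambda>y. (f y p - f x0 p) / (y - x0)) \<longlongrightarrow> f' x0 p) (at x0)"
            using deriv[OF ab False] by (simp add: has_field_derivative_iff)
          then have "(\<lambda>n. (f (X n) p - f x0 p) / (X n - x0)) \<longlonglongrightarrow> f' x0 p"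
            unfolding tendsto_at_iff_sequentially comp_def using Xl Xn(3) by auto
          then show ?thesis unfolding s_eq by (intro tendsto_intros)
        qed
      qed
      show "AE p in M. norm (s n p) \<le> D p" for n
      proof (intro AE_I2)
        fix p show "norm (s n p) \<le> D p"
        proof (cases "g p = 0")
          case True then show ?thesis using Dnn by (simp add: s_eq)
        next
          case False
          have "\<exists>z. a < z \<and> z < b \<and> (f (X n) p - f x0 p) / (X n - x0) = f' z p"
          proof (cases "X n < x0")
            case True
            obtain z where z: "X n < z" "z < x0" "f x0 p - f (X n) p = (x0 - X n) * f' z p"
              using MVT2[OF True, of "\<lambda>x. f x p" "\<lambda>x. f' x p"] deriv[OF _ _ False] Xn ab
              by (metis less_le_trans le_less_trans)
            then show ?thesis using Xn(1)[of n] Xn(2)[of n] Xn(3)[of n] ab True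
              by (intro exI[of _ z]) (auto simp: field_simps)
          next
            case False2: False
            then have lt: "x0 < X n" using Xn(3)[of n] by simp
            obtain z where z: "x0 < z" "z < X n" "f (X n) p - f x0 p = (X n - x0) * f' z p"
              using MVT2[OF lt, of "\<lambda>x. f x p" "\<lambda>x. f' x p"] deriv[OF _ _ False] Xn ab
              by (metis less_le_trans le_less_trans)
            then show ?thesis using Xn(1)[of n] Xn(2)[of n] Xn(3)[of n] ab lt
              by (intro exI[of _ z]) (auto simp: field_simps)
          qed
          then obtain z where z: "a < z" "z < b" "(f (X n) p - f x0 p) / (X n - x0) = f' z p" by blast
          show ?thesis unfolding s_eq z(3) using Db[OF z(1,2)] .
        qed
      qed
    qed
    then show "(\<lambda>n. Q (X n)) \<longlonglongrightarrow> L" unfolding Qs .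
  qed
  then have lim: "(Q \<longlongrightarrow> L) (at x0)" using at_within_open[of x0 "{a<..<b}"] ab by simp
  have limn: "((\<lambda>y. norm (Q y - L)) \<longlongrightarrow> 0) (at x0)"
    using lim by (simp add: tendsto_norm_zero_iff LIM_zero_iff)
  have ev: "\<forall>\<^sub>F y in at x0. norm (Q y - L) = norm ((F y - F x0) - (y - x0) *\<^sub>R L) / norm (y - x0)"
    unfolding eventually_at_filter
  proof (intro always_eventually allI impI)
    fix y assume y: "y \<noteq> x0"
    have "Q y - L = inverse (y - x0) *\<^sub>R ((F y - F x0) - (y - x0) *\<^sub>R L)"
      using y by (simp add: Q_def scaleR_diff_right)
    then show "norm (Q y - L) = norm ((F y - F x0) - (y - x0) *\<^sub>R L) / norm (y - x0)"
      by (simp add: divide_inverse abs_inverse mult.commute)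
  qed
  have "((\<lambda>y. norm ((F y - F x0) - (y - x0) *\<^sub>R L) / norm (y - x0)) \<longlongrightarrow> 0) (at x0)"
    using tendsto_cong[OF ev] limn by simp
  then have "(F has_derivative (\<lambda>h. h *\<^sub>R L)) (at x0)"
    unfolding has_derivative_iff_norm by (auto intro: bounded_linear_scaleR_left)
  then show ?thesis unfolding has_vector_derivative_def F_def L_def .
qed

lemma cont_integral:
  fixes h :: "'b::{first_countable_topology, t2_space} \<Rightarrow> 'a \<Rightarrow> real" and g :: "'a \<Rightarrow> complex"
  assumes hc: "\<And>p. g p \<noteq> 0 \<Longrightarrow> continuous_on B (\<lambda>q. h q p)"
    and meas: "\<And>q. q \<in> B \<Longrightarrow> (\<lambda>p. g p * of_real (h q p)) \<in> borel_measurable M"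
    and Dint: "integrable M D"
    and Db: "\<And>q p. q \<in> B \<Longrightarrow> norm (g p * of_real (h q p)) \<le> D p"
  shows "continuous_on B (\<lambda>q. \<integral>p. g p * of_real (h q p) \<partial>M)"
proof (rule continuous_on_sequentiallyI)
  fix u a assume u: "\<forall>n. u n \<in> B" and a: "a \<in> B" and ul: "u \<longlonglongrightarrow> a"
  show "(\<lambda>n. \<integral>p. g p * of_real (h (u n) p) \<partial>M) \<longlonglongrightarrow> (\<integral>p. g p * of_real (h a p) \<partial>M)"
  proof (rule integral_dominated_convergence[OF meas[OF a] _ Dint])
    show "(\<lambda>p. g p * of_real (h (u n) p)) \<in> borel_measurable M" for n using meas u by blast
    show "AE p in M. (\<lambda>n. g p * of_real (h (u n) p)) \<longlonglongrightarrow> g p * of_real (h a p)"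
    proof (intro AE_I2)
      fix p show "(\<lambda>n. g p * of_real (h (u n) p)) \<longlonglongrightarrow> g p * of_real (h a p)"
      proof (cases "g p = 0")
        case True then show ?thesis by simp
      next
        case False
        have "(\<lambda>n. h (u n) p) \<longlonglongrightarrow> h a p"
          using hc[OF False] u a ul unfolding continuous_on_sequentially comp_def by blast
        then show ?thesis by (intro tendsto_intros)
      qed
    qed
    show "AE p in M. norm (g p * of_real (h (u n) p)) \<le> D p" for n using Db u by blast
  qed
qed

lemma isCont_besselJ: "0 \<le> \<nu> \<Longrightarrow> 0 < x \<Longrightarrow> isCont (besselJ \<nu>) x"
  by (rule DERIV_isCont[OF besselJ_deriv])
lemma isCont_YY: "0 \<le> \<nu> \<Longrightarrow> 0 < x \<Longrightarrow> isCont (YY \<nu>) x"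
  by (rule DERIV_isCont[OF YYb_deriv])

lemma FF_cont: assumes "0 \<le> \<nu>" "0 < E" "0 < r"
  shows "isCont (\<lambda>q. FF \<nu> j (fst q) (snd q)) (E, r)"
proof -
  have xc: "isCont (\<lambda>q::real\<times>real. sqrt (fst q) * snd q) (E, r)"
    by (intro continuous_intros)
  have xp: "0 < sqrt (fst (E, r)) * snd (E, r)" using assms by simp
  have Jc: "isCont (\<lambda>q::real\<times>real. besselJ \<nu> (sqrt (fst q) * snd q)) (E, r)"
    by (rule isCont_o2[OF xc isCont_besselJ[OF assms(1) xp]])
  have Yc: "isCont (\<lambda>q::real\<times>real. YY \<nu> (sqrt (fst q) * snd q)) (E, r)"
    by (rule isCont_o2[OF xc isCont_YY[OF assms(1) xp]])
  consider "j = 0" | "j = Suc 0" | "j = Suc (Suc 0)" | "j = Suc (Suc (Suc 0))" | n where "j = Suc (Suc (Suc (Suc n)))"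
    by (metis not0_implies_Suc)
  then show ?thesis
  proof cases
    case 1 then show ?thesis using Jc by simp
  next
    case 2 show ?thesis unfolding 2 FF.simps by (intro Yc Jc continuous_intros) (use assms in auto)
  next
    case 3 show ?thesis unfolding 3 FF.simps by (intro Yc Jc continuous_intros) (use assms in auto)
  next
    case 4 show ?thesis unfolding 4 FF.simps by (intro Yc Jc continuous_intros) (use assms in auto)
  next
    case 5 then show ?thesis by simp
  qed
qed

lemma FF_cont_r: assumes "0 \<le> \<nu>" "0 < E" shows "continuous_on {0<..} (FF \<nu> j E)"
proof (intro continuous_at_imp_continuous_on ballI)
  fix r :: real assume "r \<in> {0<..}"
  then have "isCont (\<lambda>q. FF \<nu> j (fst q) (snd q)) (E, r)" using FF_cont assms by simp
  moreover have "isCont (\<lambda>r. (E, r)) r" by (intro continuous_intros)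
  ultimately show "isCont (FF \<nu> j E) r" using isCont_o2 by fastforce
qed

lemma FF_cont_E: assumes "0 \<le> \<nu>" "0 < E" "0 < r" shows "isCont (\<lambda>E. FF \<nu> j E r) E"
proof -
  have "isCont (\<lambda>q. FF \<nu> j (fst q) (snd q)) (E, r)" using FF_cont assms by simp
  moreover have "isCont (\<lambda>E. (E, r)) E" by (intro continuous_intros)
  ultimately show ?thesis using isCont_o2 by fastforce
qed

definition Sdom :: "(real \<times> real) set" where "Sdom = {0<..} \<times> {0<..<pi}"

definition wfun :: "(real \<Rightarrow> real \<Rightarrow> real) \<Rightarrow> int \<Rightarrow> int \<Rightarrow> real \<times> real \<Rightarrow> complex" where
  "wfun V m m' p = cnj (cis (2 * of_int m * snd p) / complex_of_real (sqrt (2 * pi)))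
     * complex_of_real ((V (fst p) (snd p))\<^sup>2)
     * (cis (2 * of_int m' * snd p) / complex_of_real (sqrt (2 * pi))) * complex_of_real (fst p)"

lemma wfun_norm: "0 < fst p \<Longrightarrow> norm (wfun V m m' p) = (V (fst p) (snd p))\<^sup>2 * fst p / (2 * pi)"
proof -
  assume r: "0 < fst p"
  have s: "sqrt (2 * pi) * sqrt (2 * pi) = 2 * pi" by simp
  have "norm (wfun V m m' p) = (V (fst p) (snd p))\<^sup>2 * fst p / (sqrt (2 * pi) * sqrt (2 * pi))"
    unfolding wfun_def using r by (simp add: norm_mult norm_divide norm_power power2_abs)
  then show ?thesis unfolding s .
qed

lemma int_meas:
  assumes V_meas: "set_borel_measurable lborel ({0<..} \<times> UNIV) (\<lambda>p. V (fst p) (snd p))"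
    and A: "continuous_on {0<..} A"
  shows "(\<lambda>p. indicator Sdom p *\<^sub>R (wfun V m m' p * of_real (A (fst p)))) \<in> borel_measurable lborel"
proof -
  define h1 where "h1 p = indicator ({0<..} \<times> (UNIV::real set)) p *\<^sub>R V (fst p) (snd p)" for p :: "real \<times> real"
  define h2 where "h2 r = indicator {0<..} r *\<^sub>R A r" for r :: real
  have h1m: "h1 \<in> borel_measurable borel" using V_meas unfolding set_borel_measurable_def h1_def by simp
  have h2m: "h2 \<in> borel_measurable borel" unfolding h2_def
    by (rule borel_measurable_continuous_on_indicator[OF _ A]) auto
  define c where "c p = cnj (cis (2 * of_int m * snd p) / complex_of_real (sqrt (2 * pi)))
     * (cis (2 * of_int m' * snd p) / complex_of_real (sqrt (2 * pi))) * complex_of_real (fst p)" for p :: "real \<times> real"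
  have cm: "c \<in> borel_measurable borel" unfolding c_def
    by (intro borel_measurable_continuous_onI continuous_intros) auto
  have Sm: "Sdom \<in> sets borel" unfolding Sdom_def by (intro borel_open open_Times) auto
  have eq: "(\<lambda>p. indicator Sdom p *\<^sub>R (wfun V m m' p * of_real (A (fst p))))
      = (\<lambda>p. indicator Sdom p *\<^sub>R (c p * (complex_of_real ((h1 p)\<^sup>2) * of_real (h2 (fst p)))))"
    by (rule ext) (auto simp: Sdom_def wfun_def h1_def h2_def c_def indicator_def)
  have "(\<lambda>p. indicator Sdom p *\<^sub>R (c p * (complex_of_real ((h1 p)\<^sup>2) * of_real (h2 (fst p)))))
     \<in> borel_measurable borel"
  proof -
    have fm: "(\<lambda>p::real\<times>real. h2 (fst p)) \<in> borel_measurable borel"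
      by (rule measurable_compose[OF _ h2m]) (intro borel_measurable_continuous_onI continuous_intros)
    show ?thesis using h1m fm cm Sm by measurable
  qed
  then show ?thesis unfolding eq by (simp add: measurable_def)
qed

lemma int_bound:
  assumes "\<forall>r>0. \<bar>A r\<bar> \<le> K * (1 + r)^2"
  shows "norm (indicator Sdom p *\<^sub>R (wfun V m m' p * of_real (A (fst p))))
     \<le> K / (2 * pi) * (indicator Sdom p *\<^sub>R (((1 + fst p) * V (fst p) (snd p))\<^sup>2 * fst p))"
proof (cases "p \<in> Sdom")
  case False
  have "0 \<le> K * (1 + 1)^2" using assms by (metis abs_ge_zero order_trans zero_less_one)
  then have "0 \<le> K" by simp
  with False show ?thesis by simp
next
  case True
  then have r: "0 < fst p" by (auto simp: Sdom_def)
  have "norm (wfun V m m' p * of_real (A (fst p))) = (V (fst p) (snd p))\<^sup>2 * fst p / (2 * pi) * \<bar>A (fst p)\<bar>"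
    using wfun_norm[OF r] by (simp add: norm_mult)
  also have "\<dots> \<le> (V (fst p) (snd p))\<^sup>2 * fst p / (2 * pi) * (K * (1 + fst p)^2)"
    using assms r by (intro mult_left_mono) auto
  also have "\<dots> = K / (2 * pi) * (((1 + fst p) * V (fst p) (snd p))\<^sup>2 * fst p)"
    by (simp add: power_mult_distrib)
  finally show ?thesis using True by simp
qed

lemma int_integrable:
  assumes V_meas: "set_borel_measurable lborel ({0<..} \<times> UNIV) (\<lambda>p. V (fst p) (snd p))"
    and V_L2: "set_integrable lborel ({0<..} \<times> {0<..<pi}) (\<lambda>p. ((1 + fst p) * V (fst p) (snd p))\<^sup>2 * fst p)"
    and A: "continuous_on {0<..} A" and B: "\<forall>r>0. \<bar>A r\<bar> \<le> K * (1 + r)^2" and K: "0 \<le> K"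
  shows "integrable lborel (\<lambda>p. indicator Sdom p *\<^sub>R (wfun V m m' p * of_real (A (fst p))))"
proof (rule Bochner_Integration.integrable_bound[OF _ int_meas[OF V_meas A]])
  show "integrable lborel (\<lambda>p. K / (2 * pi) * (indicator Sdom p *\<^sub>R (((1 + fst p) * V (fst p) (snd p))\<^sup>2 * fst p)))"
    using V_L2 unfolding set_integrable_def Sdom_def by (intro integrable_mult_right)
  show "AE p in lborel. norm (indicator Sdom p *\<^sub>R (wfun V m m' p * of_real (A (fst p))))
      \<le> norm (K / (2 * pi) * (indicator Sdom p *\<^sub>R (((1 + fst p) * V (fst p) (snd p))\<^sup>2 * fst p)))"
  proof (intro AE_I2)
    fix p :: "real \<times> real"
    have nn: "0 \<le> K / (2 * pi) * (indicator Sdom p *\<^sub>R (((1 + fst p) * V (fst p) (snd p))\<^sup>2 * fst p))"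
      using K by (cases "p \<in> Sdom") (auto simp: Sdom_def)
    show "norm (indicator Sdom p *\<^sub>R (wfun V m m' p * of_real (A (fst p))))
      \<le> norm (K / (2 * pi) * (indicator Sdom p *\<^sub>R (((1 + fst p) * V (fst p) (snd p))\<^sup>2 * fst p)))"
    proof -
      have e: "norm (K / (2 * pi) * (indicator Sdom p *\<^sub>R (((1 + fst p) * V (fst p) (snd p))\<^sup>2 * fst p)))
        = K / (2 * pi) * (indicator Sdom p *\<^sub>R (((1 + fst p) * V (fst p) (snd p))\<^sup>2 * fst p))"
        using nn by (simp only: real_norm_def abs_of_nonneg)
      show ?thesis unfolding e by (rule int_bound[OF B])
    qed
  qed
qed

lemma prod_bound: assumes "0 \<le> \<nu>" "0 \<le> \<mu>" "0 < e1" "0 < e1'" "a + b \<le> 3"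
  shows "\<exists>K\<ge>0. \<forall>E E' r. e1 \<le> E \<longrightarrow> E \<le> e2 \<longrightarrow> e1' \<le> E' \<longrightarrow> E' \<le> e2' \<longrightarrow> 0 < r \<longrightarrow>
    \<bar>FF \<nu> a E r * FF \<mu> b E' r\<bar> \<le> K * (1 + r)^2"
proof -
  obtain Ka where Ka: "\<forall>E r. e1 \<le> E \<longrightarrow> E \<le> e2 \<longrightarrow> 0 < r \<longrightarrow> \<bar>FF \<nu> a E r\<bar> * sqrt (1 + r) \<le> Ka * (1 + r)^a"
    using FF_bound[OF assms(1,3), of a e2] assms(5) by auto
  obtain Kb where Kb: "\<forall>E r. e1' \<le> E \<longrightarrow> E \<le> e2' \<longrightarrow> 0 < r \<longrightarrow> \<bar>FF \<mu> b E r\<bar> * sqrt (1 + r) \<le> Kb * (1 + r)^b"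
    using FF_bound[OF assms(2,4), of b e2'] assms(5) by auto
  show ?thesis
  proof (intro exI[of _ "\<bar>Ka\<bar> * \<bar>Kb\<bar>"] conjI allI impI)
    fix E E' r :: real assume E: "e1 \<le> E" "E \<le> e2" and E': "e1' \<le> E'" "E' \<le> e2'" and r: "0 < r"
    have r1: "1 \<le> 1 + r" using r by simp
    have s: "sqrt (1 + r) * sqrt (1 + r) = 1 + r" using r by simp
    have a1: "\<bar>FF \<nu> a E r\<bar> * sqrt (1 + r) \<le> \<bar>Ka\<bar> * (1 + r)^a"
      using Ka E r order_trans[OF _ mult_right_mono[OF abs_ge_self]] by (meson r1 zero_le_power order_trans zero_le_one)
    have b1: "\<bar>FF \<mu> b E' r\<bar> * sqrt (1 + r) \<le> \<bar>Kb\<bar> * (1 + r)^b"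
      using Kb E' r order_trans[OF _ mult_right_mono[OF abs_ge_self]] by (meson r1 zero_le_power order_trans zero_le_one)
    have "(\<bar>FF \<nu> a E r\<bar> * sqrt (1 + r)) * (\<bar>FF \<mu> b E' r\<bar> * sqrt (1 + r))
        = \<bar>FF \<nu> a E r * FF \<mu> b E' r\<bar> * (sqrt (1 + r) * sqrt (1 + r))"
      by (simp add: abs_mult mult_ac)
    then have "\<bar>FF \<nu> a E r * FF \<mu> b E' r\<bar> * (1 + r)
        = (\<bar>FF \<nu> a E r\<bar> * sqrt (1 + r)) * (\<bar>FF \<mu> b E' r\<bar> * sqrt (1 + r))"
      unfolding s by simp
    also have "\<dots> \<le> (\<bar>Ka\<bar> * (1 + r)^a) * (\<bar>Kb\<bar> * (1 + r)^b)"
      by (rule mult_mono[OF a1 b1]) (use r in auto)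
    also have "\<dots> = \<bar>Ka\<bar> * \<bar>Kb\<bar> * (1 + r)^(a + b)" by (simp add: power_add algebra_simps)
    also have "\<dots> \<le> \<bar>Ka\<bar> * \<bar>Kb\<bar> * (1 + r)^3"
      using r1 assms(5) by (intro mult_left_mono power_increasing) auto
    also have "\<dots> = (\<bar>Ka\<bar> * \<bar>Kb\<bar> * (1 + r)^2) * (1 + r)" by (simp add: power3_eq_cube power2_eq_square)
    finally show "\<bar>FF \<nu> a E r * FF \<mu> b E' r\<bar> \<le> \<bar>Ka\<bar> * \<bar>Kb\<bar> * (1 + r)^2"
      using r by (simp add: mult_le_cancel_right)
  qed simp
qed

lemma ind_rw: "(indicator S p *\<^sub>R (w * complex_of_real G)) * complex_of_real F
   = indicator S p *\<^sub>R (w * complex_of_real (F * G))"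
  by (simp add: of_real_mult mult_ac)

lemma deriv_gen:
  assumes V_meas: "set_borel_measurable lborel ({0<..} \<times> UNIV) (\<lambda>p. V (fst p) (snd p))"
    and V_L2: "set_integrable lborel ({0<..} \<times> {0<..<pi}) (\<lambda>p. ((1 + fst p) * V (fst p) (snd p))\<^sup>2 * fst p)"
    and ab: "a < x0" "x0 < b"
    and dP: "\<And>x r. a < x \<Longrightarrow> x < b \<Longrightarrow> 0 < r \<Longrightarrow> ((\<lambda>x. P x r) has_real_derivative P' x r) (at x)"
    and cP: "\<And>x. a < x \<Longrightarrow> x < b \<Longrightarrow> continuous_on {0<..} (P x)"
    and cP': "continuous_on {0<..} (P' x0)" and cQ: "continuous_on {0<..} Q"
    and bP: "\<And>x r. a < x \<Longrightarrow> x < b \<Longrightarrow> 0 < r \<Longrightarrow> \<bar>P x r * Q r\<bar> \<le> K * (1 + r)^2"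
    and bP': "\<And>x r. a < x \<Longrightarrow> x < b \<Longrightarrow> 0 < r \<Longrightarrow> \<bar>P' x r * Q r\<bar> \<le> K' * (1 + r)^2"
    and K: "0 \<le> K" "0 \<le> K'"
  shows "((\<lambda>x. LINT p:Sdom|lborel. wfun V m m' p * complex_of_real (P x (fst p) * Q (fst p)))
     has_vector_derivative (LINT p:Sdom|lborel. wfun V m m' p * complex_of_real (P' x0 (fst p) * Q (fst p)))) (at x0)"
proof -
  define g where "g p = indicator Sdom p *\<^sub>R (wfun V m m' p * complex_of_real (Q (fst p)))" for p
  have eqI: "(LINT p:Sdom|lborel. wfun V m m' p * complex_of_real (R (fst p) * Q (fst p)))
     = (\<integral>p. g p * complex_of_real (R (fst p)) \<partial>lborel)" for R
    unfolding set_lebesgue_integral_def g_def ind_rw ..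
  have "((\<lambda>x. \<integral>p. g p * complex_of_real (P x (fst p)) \<partial>lborel) has_vector_derivative
         (\<integral>p. g p * complex_of_real (P' x0 (fst p)) \<partial>lborel)) (at x0)"
  proof (rule deriv_integral[OF ab, where D = "\<lambda>p. K' / (2 * pi) * (indicator Sdom p *\<^sub>R (((1 + fst p) * V (fst p) (snd p))\<^sup>2 * fst p))"])
    fix x p assume x: "a < x" "x < b" and gp: "g p \<noteq> 0"
    then have "p \<in> Sdom" unfolding g_def by (cases "p \<in> Sdom") auto
    then have "0 < fst p" by (auto simp: Sdom_def)
    then show "((\<lambda>x. P x (fst p)) has_real_derivative P' x (fst p)) (at x)" using dP x by blast
  next
    fix x assume x: "a < x" "x < b"
    have c: "continuous_on {0<..} (\<lambda>r. P x r * Q r)" using cP[OF x] cQ by (intro continuous_intros)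
    show "integrable lborel (\<lambda>p. g p * complex_of_real (P x (fst p)))"
      unfolding g_def ind_rw
      by (rule int_integrable[OF V_meas V_L2 c _ K(1)]) (use bP x in auto)
  next
    have c: "continuous_on {0<..} (\<lambda>r. P' x0 r * Q r)" using cP' cQ by (intro continuous_intros)
    show "(\<lambda>p. g p * complex_of_real (P' x0 (fst p))) \<in> borel_measurable lborel"
      unfolding g_def ind_rw by (rule int_meas[OF V_meas c])
  next
    show "integrable lborel (\<lambda>p. K' / (2 * pi) * (indicator Sdom p *\<^sub>R (((1 + fst p) * V (fst p) (snd p))\<^sup>2 * fst p)))"
      using V_L2 unfolding set_integrable_def Sdom_def by (intro integrable_mult_right)
  next
    fix x p assume x: "a < x" "x < b"
    show "norm (g p * complex_of_real (P' x (fst p)))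
        \<le> K' / (2 * pi) * (indicator Sdom p *\<^sub>R (((1 + fst p) * V (fst p) (snd p))\<^sup>2 * fst p))"
      unfolding g_def ind_rw by (rule int_bound) (use bP' x in auto)
  qed
  then show ?thesis unfolding eqI .
qed

lemma cont_gen:
  fixes H :: "real \<times> real \<Rightarrow> real \<Rightarrow> real"
  assumes V_meas: "set_borel_measurable lborel ({0<..} \<times> UNIV) (\<lambda>p. V (fst p) (snd p))"
    and V_L2: "set_integrable lborel ({0<..} \<times> {0<..<pi}) (\<lambda>p. ((1 + fst p) * V (fst p) (snd p))\<^sup>2 * fst p)"
    and cq: "\<And>r. 0 < r \<Longrightarrow> continuous_on B (\<lambda>q. H q r)"
    and cr: "\<And>q. q \<in> B \<Longrightarrow> continuous_on {0<..} (H q)"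
    and bH: "\<And>q r. q \<in> B \<Longrightarrow> 0 < r \<Longrightarrow> \<bar>H q r\<bar> \<le> K * (1 + r)^2" and K: "0 \<le> K"
  shows "continuous_on B (\<lambda>q. LINT p:Sdom|lborel. wfun V m m' p * complex_of_real (H q (fst p)))"
proof -
  define g where "g p = indicator Sdom p *\<^sub>R wfun V m m' p" for p
  have eqI: "(LINT p:Sdom|lborel. wfun V m m' p * complex_of_real (H q (fst p)))
     = (\<integral>p. g p * complex_of_real (H q (fst p)) \<partial>lborel)" for q
    unfolding set_lebesgue_integral_def g_def by (simp add: mult_ac)
  have "continuous_on B (\<lambda>q. \<integral>p. g p * complex_of_real (H q (fst p)) \<partial>lborel)"
  proof (rule cont_integral[where h = "\<lambda>q p. H q (fst p)" and D = "\<lambda>p. K / (2 * pi) * (indicator Sdom p *\<^sub>R (((1 + fst p) * V (fst p) (snd p))\<^sup>2 * fst p))"])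
    fix p assume gp: "g p \<noteq> 0"
    then have "p \<in> Sdom" unfolding g_def by (cases "p \<in> Sdom") auto
    then have "0 < fst p" by (auto simp: Sdom_def)
    then show "continuous_on B (\<lambda>q. H q (fst p))" using cq by blast
  next
    fix q assume q: "q \<in> B"
    have "(\<lambda>p. indicator Sdom p *\<^sub>R (wfun V m m' p * of_real (H q (fst p)))) \<in> borel_measurable lborel"
      by (rule int_meas[OF V_meas cr[OF q]])
    then show "(\<lambda>p. g p * complex_of_real (H q (fst p))) \<in> borel_measurable lborel"
      unfolding g_def by (simp add: mult_ac)
  next
    show "integrable lborel (\<lambda>p. K / (2 * pi) * (indicator Sdom p *\<^sub>R (((1 + fst p) * V (fst p) (snd p))\<^sup>2 * fst p)))"
      using V_L2 unfolding set_integrable_def Sdom_def by (intro integrable_mult_right)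
  next
    fix q p assume q: "q \<in> B"
    have "norm (indicator Sdom p *\<^sub>R (wfun V m m' p * of_real (H q (fst p))))
        \<le> K / (2 * pi) * (indicator Sdom p *\<^sub>R (((1 + fst p) * V (fst p) (snd p))\<^sup>2 * fst p))"
      by (rule int_bound) (use bH q in auto)
    then show "norm (g p * complex_of_real (H q (fst p)))
        \<le> K / (2 * pi) * (indicator Sdom p *\<^sub>R (((1 + fst p) * V (fst p) (snd p))\<^sup>2 * fst p))"
      unfolding g_def by (simp add: mult_ac)
  qed
  then show ?thesis unfolding eqI .
qed

definition Iab :: "(real \<Rightarrow> real \<Rightarrow> real) \<Rightarrow> int \<Rightarrow> int \<Rightarrow> real \<Rightarrow> real \<Rightarrow> nat \<Rightarrow> nat \<Rightarrow> real \<Rightarrow> real \<Rightarrow> complex" where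
  "Iab V m m' \<nu> \<mu> a b E E' = (LINT p:Sdom|lborel. wfun V m m' p * complex_of_real (FF \<nu> a E (fst p) * FF \<mu> b E' (fst p)))"

locale Vsetting =
  fixes V :: "real \<Rightarrow> real \<Rightarrow> real" and m m' :: int and \<nu> \<mu> :: real
  assumes V_meas: "set_borel_measurable lborel ({0<..} \<times> UNIV) (\<lambda>p. V (fst p) (snd p))"
    and V_L2: "set_integrable lborel ({0<..} \<times> {0<..<pi}) (\<lambda>p. ((1 + fst p) * V (fst p) (snd p))\<^sup>2 * fst p)"
    and nu: "0 \<le> \<nu>" and mu: "0 \<le> \<mu>"
begin

abbreviation "I \<equiv> Iab V m m' \<nu> \<mu>"

lemma I_dE: assumes "a + b \<le> 2" "0 < E" "0 < E'"
  shows "((\<lambda>x. I a b x E') has_vector_derivative I (Suc a) b E E') (at E)"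
proof -
  obtain K where K: "K \<ge> 0" "\<forall>x y r. E/2 \<le> x \<longrightarrow> x \<le> 2*E \<longrightarrow> E' \<le> y \<longrightarrow> y \<le> E' \<longrightarrow> 0 < r \<longrightarrow>
      \<bar>FF \<nu> a x r * FF \<mu> b y r\<bar> \<le> K * (1 + r)^2"
    using prod_bound[OF nu mu, of "E/2" E' a b "2*E" E'] assms by auto
  obtain K' where K': "K' \<ge> 0" "\<forall>x y r. E/2 \<le> x \<longrightarrow> x \<le> 2*E \<longrightarrow> E' \<le> y \<longrightarrow> y \<le> E' \<longrightarrow> 0 < r \<longrightarrow>
      \<bar>FF \<nu> (Suc a) x r * FF \<mu> b y r\<bar> \<le> K' * (1 + r)^2"
    using prod_bound[OF nu mu, of "E/2" E' "Suc a" b "2*E" E'] assms by auto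
  show ?thesis unfolding Iab_def
  proof (rule deriv_gen[OF V_meas V_L2, of "E/2" E "2*E" "FF \<nu> a" "FF \<nu> (Suc a)" "FF \<mu> b E'" K K'])
    show "E / 2 < E" "E < 2 * E" using assms by auto
    show "((\<lambda>x. FF \<nu> a x r) has_real_derivative FF \<nu> (Suc a) x r) (at x)"
      if "E / 2 < x" "x < 2 * E" "0 < r" for x r
      using FF_deriv[OF nu _ that(3)] that assms by auto
    show "continuous_on {0<..} (FF \<nu> a x)" if "E / 2 < x" "x < 2 * E" for x
      using FF_cont_r[OF nu] that assms by auto
    show "continuous_on {0<..} (FF \<nu> (Suc a) E)" using FF_cont_r[OF nu] assms by auto
    show "continuous_on {0<..} (FF \<mu> b E')" using FF_cont_r[OF mu] assms by auto
    show "\<bar>FF \<nu> a x r * FF \<mu> b E' r\<bar> \<le> K * (1 + r)\<^sup>2" if "E / 2 < x" "x < 2 * E" "0 < r" for x r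
      using K that by auto
    show "\<bar>FF \<nu> (Suc a) x r * FF \<mu> b E' r\<bar> \<le> K' * (1 + r)\<^sup>2" if "E / 2 < x" "x < 2 * E" "0 < r" for x r
      using K' that by auto
  qed (use K K' in auto)
qed

lemma I_swap: "I a b E E' = (LINT p:Sdom|lborel. wfun V m m' p * complex_of_real (FF \<mu> b E' (fst p) * FF \<nu> a E (fst p)))"
  unfolding Iab_def by (simp add: mult.commute)

lemma I_dE': assumes "a + b \<le> 2" "0 < E" "0 < E'"
  shows "((\<lambda>y. I a b E y) has_vector_derivative I a (Suc b) E E') (at E')"
proof -
  obtain K where K: "K \<ge> 0" "\<forall>x y r. E \<le> x \<longrightarrow> x \<le> E \<longrightarrow> E'/2 \<le> y \<longrightarrow> y \<le> 2*E' \<longrightarrow> 0 < r \<longrightarrow>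
      \<bar>FF \<nu> a x r * FF \<mu> b y r\<bar> \<le> K * (1 + r)^2"
    using prod_bound[OF nu mu, of E "E'/2" a b E "2*E'"] assms by auto
  obtain K' where K': "K' \<ge> 0" "\<forall>x y r. E \<le> x \<longrightarrow> x \<le> E \<longrightarrow> E'/2 \<le> y \<longrightarrow> y \<le> 2*E' \<longrightarrow> 0 < r \<longrightarrow>
      \<bar>FF \<nu> a x r * FF \<mu> (Suc b) y r\<bar> \<le> K' * (1 + r)^2"
    using prod_bound[OF nu mu, of E "E'/2" a "Suc b" E "2*E'"] assms by auto
  show ?thesis unfolding I_swap
  proof (rule deriv_gen[OF V_meas V_L2, of "E'/2" E' "2*E'" "FF \<mu> b" "FF \<mu> (Suc b)" "FF \<nu> a E" K K'])
    show "E' / 2 < E'" "E' < 2 * E'" using assms by auto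
    show "((\<lambda>x. FF \<mu> b x r) has_real_derivative FF \<mu> (Suc b) x r) (at x)"
      if "E' / 2 < x" "x < 2 * E'" "0 < r" for x r
      using FF_deriv[OF mu _ that(3)] that assms by auto
    show "continuous_on {0<..} (FF \<mu> b x)" if "E' / 2 < x" "x < 2 * E'" for x
      using FF_cont_r[OF mu] that assms by auto
    show "continuous_on {0<..} (FF \<mu> (Suc b) E')" using FF_cont_r[OF mu] assms by auto
    show "continuous_on {0<..} (FF \<nu> a E)" using FF_cont_r[OF nu] assms by auto
    show "\<bar>FF \<mu> b x r * FF \<nu> a E r\<bar> \<le> K * (1 + r)\<^sup>2" if "E' / 2 < x" "x < 2 * E'" "0 < r" for x r
      using K that by (auto simp: mult.commute)
    show "\<bar>FF \<mu> (Suc b) x r * FF \<nu> a E r\<bar> \<le> K' * (1 + r)\<^sup>2" if "E' / 2 < x" "x < 2 * E'" "0 < r" for x r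
      using K' that by (auto simp: mult.commute)
  qed (use K K' in auto)
qed

lemma I_cont: assumes "a + b \<le> 3"
  shows "continuous_on ({0<..} \<times> {0<..}) (\<lambda>q. I a b (fst q) (snd q))"
proof (intro continuous_at_imp_continuous_on ballI)
  fix q0 :: "real \<times> real" assume "q0 \<in> {0<..} \<times> {0<..}"
  then obtain E0 E0' where q0: "q0 = (E0, E0')" "0 < E0" "0 < E0'" by auto
  define B where "B = {E0/2..2*E0} \<times> {E0'/2..2*E0'}"
  have Bpos: "0 < fst q \<and> 0 < snd q" if "q \<in> B" for q using that q0 by (auto simp: B_def)
  obtain K where K: "K \<ge> 0" "\<forall>x y r. E0/2 \<le> x \<longrightarrow> x \<le> 2*E0 \<longrightarrow> E0'/2 \<le> y \<longrightarrow> y \<le> 2*E0' \<longrightarrow> 0 < r \<longrightarrow>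
      \<bar>FF \<nu> a x r * FF \<mu> b y r\<bar> \<le> K * (1 + r)^2"
    using prod_bound[OF nu mu, of "E0/2" "E0'/2" a b "2*E0" "2*E0'"] assms q0 by auto
  have "continuous_on B (\<lambda>q. LINT p:Sdom|lborel. wfun V m m' p * complex_of_real ((\<lambda>q r. FF \<nu> a (fst q) r * FF \<mu> b (snd q) r) q (fst p)))"
  proof (rule cont_gen[OF V_meas V_L2 _ _ _ K(1)])
    fix r :: real assume r: "0 < r"
    show "continuous_on B (\<lambda>q. FF \<nu> a (fst q) r * FF \<mu> b (snd q) r)"
    proof (intro continuous_at_imp_continuous_on ballI continuous_intros)
      fix q assume q: "q \<in> B"
      show "isCont (\<lambda>q. FF \<nu> a (fst q) r) q"
        by (rule isCont_o2[OF isCont_fst[OF continuous_ident] FF_cont_E[OF nu _ r]]) (use Bpos q in auto)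
      show "isCont (\<lambda>q. FF \<mu> b (snd q) r) q"
        by (rule isCont_o2[OF isCont_snd[OF continuous_ident] FF_cont_E[OF mu _ r]]) (use Bpos q in auto)
    qed
  next
    fix q assume q: "q \<in> B"
    show "continuous_on {0<..} (\<lambda>r. FF \<nu> a (fst q) r * FF \<mu> b (snd q) r)"
      using FF_cont_r[OF nu, of "fst q" a] FF_cont_r[OF mu, of "snd q" b] Bpos[OF q]
      by (intro continuous_intros) auto
  next
    fix q and r :: real assume q: "q \<in> B" and r: "0 < r"
    show "\<bar>FF \<nu> a (fst q) r * FF \<mu> b (snd q) r\<bar> \<le> K * (1 + r)^2"
      using K(2) q r by (auto simp: B_def)
  qed
  then have "continuous_on B (\<lambda>q. I a b (fst q) (snd q))" unfolding Iab_def by simp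
  moreover have "q0 \<in> interior B" unfolding B_def interior_Times q0 using q0 by auto
  ultimately show "isCont (\<lambda>q. I a b (fst q) (snd q)) q0" by (rule continuous_on_interior)
qed

end

definition cT :: "bool list \<Rightarrow> nat" where "cT ds = length (filter (\<lambda>d. d) ds)"
definition cF :: "bool list \<Rightarrow> nat" where "cF ds = length (filter (\<lambda>d. \<not> d) ds)"

lemma cTF: "cT ds + cF ds = length ds"
  unfolding cT_def cF_def using sum_length_filter_compl[of "\<lambda>d. d" ds] by simp

lemma vmat_eq: "vmat V \<alpha> m m' E E' = Iab V m m' \<bar>2 * of_int m + \<alpha>\<bar> \<bar>2 * of_int m' + \<alpha>\<bar> 0 0 E E'"
  unfolding vmat_def Iab_def set_lebesgue_integral_def
  by (intro arg_cong[where f = "integral\<^sup>L lborel"] ext)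
     (simp add: phi_def wfun_def Sdom_def of_real_mult mult_ac)

theorem lemma3:
  fixes V :: "real \<Rightarrow> real \<Rightarrow> real" and \<alpha> :: real and m m' :: int
  assumes V_meas: "set_borel_measurable lborel ({0<..} \<times> UNIV) (\<lambda>p. V (fst p) (snd p))"
    and V_per: "\<And>r \<theta>. V r (\<theta> + pi) = V r \<theta>"
    and V_L2: "set_integrable lborel ({0<..} \<times> {0<..<pi})
                 (\<lambda>p. ((1 + fst p) * V (fst p) (snd p))\<^sup>2 * fst p)"
    and \<alpha>: "0 \<le> \<alpha>" "\<alpha> \<le> 1"
  shows "\<forall>ds. length ds \<le> 3 \<longrightarrow>
           (\<forall>E E'. 0 < E \<longrightarrow> 0 < E' \<longrightarrow>
              (\<forall>d ds'. ds = d # ds' \<longrightarrow> partial_exists d ds' (vmat V \<alpha> m m') E E'))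
         \<and> set_borel_measurable lborel ({0<..} \<times> {0<..})
              (\<lambda>p. pderivs ds (vmat V \<alpha> m m') (fst p) (snd p))
         \<and> (\<forall>K. compact K \<and> K \<subseteq> {0<..} \<times> {0<..} \<longrightarrow>
              (\<exists>C. AE p in lborel. p \<in> K \<longrightarrow>
                     norm (pderivs ds (vmat V \<alpha> m m') (fst p) (snd p)) \<le> C))"
proof -
  define \<nu> where "\<nu> = \<bar>2 * of_int m + \<alpha>\<bar>"
  define \<mu> where "\<mu> = \<bar>2 * of_int m' + \<alpha>\<bar>"
  interpret Vs: Vsetting V m m' \<nu> \<mu>
    using V_meas V_L2 by unfold_locales (auto simp: \<nu>_def \<mu>_def)
  define f where "f = vmat V \<alpha> m m'"
  have f_eq: "f E E' = Vs.I 0 0 E E'" for E E' unfolding f_def \<nu>_def \<mu>_def by (rule vmat_eq)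
  have main: "length ds \<le> 3 \<Longrightarrow> 0 < E \<Longrightarrow> 0 < E' \<Longrightarrow> pderivs ds f E E' = Vs.I (cT ds) (cF ds) E E'"
    for ds E E'
  proof (induction ds arbitrary: E E')
    case Nil then show ?case by (simp add: f_eq cT_def cF_def)
  next
    case (Cons d ds)
    have len: "cT ds + cF ds \<le> 2" using Cons.prems(1) cTF[of ds] by simp
    show ?case
    proof (cases d)
      case True
      have "((\<lambda>x. pderivs ds f x E') has_vector_derivative Vs.I (Suc (cT ds)) (cF ds) E E') (at E)"
        by (rule has_vector_derivative_transform_within_open[OF Vs.I_dE[OF len Cons.prems(2,3)] open_greaterThan, of 0])
           (use Cons in auto)
      then show ?thesis using True by (simp add: vector_derivative_at cT_def cF_def)
    next
      case False
      have "((\<lambda>y. pderivs ds f E y) has_vector_derivative Vs.I (cT ds) (Suc (cF ds)) E E') (at E')"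
        by (rule has_vector_derivative_transform_within_open[OF Vs.I_dE'[OF len Cons.prems(2,3)] open_greaterThan, of 0])
           (use Cons in auto)
      then show ?thesis using False by (simp add: vector_derivative_at cT_def cF_def)
    qed
  qed
  have Sb: "({0<..} \<times> {0<..} :: (real \<times> real) set) \<in> sets borel"
    by (intro borel_open open_Times) auto
  show ?thesis
  proof (intro allI impI conjI)
    fix ds :: "bool list" assume ds: "length ds \<le> 3"
    have len3: "cT ds + cF ds \<le> 3" using ds cTF[of ds] by simp
    have Ic: "continuous_on ({0<..} \<times> {0<..}) (\<lambda>q. Vs.I (cT ds) (cF ds) (fst q) (snd q))"
      by (rule Vs.I_cont[OF len3])
    {
      fix E E' :: real and d ds' assume EE: "0 < E" "0 < E'" and dd: "ds = d # ds'"
      have len: "cT ds' + cF ds' \<le> 2" using ds dd cTF[of ds'] by simp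
      show "partial_exists d ds' (vmat V \<alpha> m m') E E'"
      proof (cases d)
        case True
        have "((\<lambda>x. pderivs ds' f x E') has_vector_derivative Vs.I (Suc (cT ds')) (cF ds') E E') (at E)"
          by (rule has_vector_derivative_transform_within_open[OF Vs.I_dE[OF len EE] open_greaterThan, of 0])
             (use main ds dd EE in auto)
        then show ?thesis using True unfolding partial_exists_def f_def by (auto intro: differentiableI_vector)
      next
        case False
        have "((\<lambda>y. pderivs ds' f E y) has_vector_derivative Vs.I (cT ds') (Suc (cF ds')) E E') (at E')"
          by (rule has_vector_derivative_transform_within_open[OF Vs.I_dE'[OF len EE] open_greaterThan, of 0])
             (use main ds dd EE in auto)
        then show ?thesis using False unfolding partial_exists_def f_def by (auto intro: differentiableI_vector)
      qed
    }
    have eqS: "(\<lambda>p. indicator ({0<..} \<times> {0<..}) p *\<^sub>R pderivs ds (vmat V \<alpha> m m') (fst p) (snd p))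
        = (\<lambda>p. indicator ({0<..} \<times> {0<..}) p *\<^sub>R Vs.I (cT ds) (cF ds) (fst p) (snd p))"
      by (rule ext) (auto simp: indicator_def main[OF ds] f_def[symmetric] mem_Times_iff)
    have "(\<lambda>p. indicator ({0<..} \<times> {0<..}) p *\<^sub>R Vs.I (cT ds) (cF ds) (fst p) (snd p)) \<in> borel_measurable borel"
      by (rule borel_measurable_continuous_on_indicator[OF Sb Ic])
    then show "set_borel_measurable lborel ({0<..} \<times> {0<..}) (\<lambda>p. pderivs ds (vmat V \<alpha> m m') (fst p) (snd p))"
      unfolding set_borel_measurable_def eqS by (simp add: measurable_def)
    fix K :: "(real \<times> real) set" assume K: "compact K \<and> K \<subseteq> {0<..} \<times> {0<..}"
    have "continuous_on K (\<lambda>q. Vs.I (cT ds) (cF ds) (fst q) (snd q))"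
      using continuous_on_subset[OF Ic] K by blast
    then have "bounded ((\<lambda>q. Vs.I (cT ds) (cF ds) (fst q) (snd q)) ` K)"
      using K by (intro compact_imp_bounded compact_continuous_image) auto
    then obtain C where C: "\<forall>q\<in>K. norm (Vs.I (cT ds) (cF ds) (fst q) (snd q)) \<le> C"
      unfolding bounded_iff by auto
    show "\<exists>C. AE p in lborel. p \<in> K \<longrightarrow> norm (pderivs ds (vmat V \<alpha> m m') (fst p) (snd p)) \<le> C"
    proof (intro exI[of _ C] AE_I2 impI)
      fix p assume p: "p \<in> K"
      then have "0 < fst p" "0 < snd p" using K by (auto simp: mem_Times_iff)
      then show "norm (pderivs ds (vmat V \<alpha> m m') (fst p) (snd p)) \<le> C"
        using main[OF ds] C p unfolding f_def by auto
    qed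
  qed
qed

end
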